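(* Fix $w\in S_n$ and consider $H^*(X_w)$ as a $\mathbb{C}[S_n]$-module with the $S_n$-action inherited from $H^*_T(X_w)$. Then $H^*(X_w)$ is isomorphic to $\bigoplus_{v\in S_n,\ v\le w}1^{\ell(v)}$ as a graded $\mathbb{C}[S_n]$-module.
   Context: Let $G=GL_n(\mathbb{C})$, $B$ the invertible upper-triangular matrices, and $T$ the diagonal torus. Permutations are identified with permutation matrices via $we_i=e_{w(i)}$, and $s_{jk}$ is the transposition of $j,k$. $X_w=\overline{BwB/B}$, and the Bruhat order is $v\le w$ iff $[v]\in X_w$. $\ell(v)$ is the number of pairs $i<j$ with $v^{-1}(i)>v^{-1}(j)$. In GKM form, $H^*_T(X_w)$ is the ring of tuples $(p_u)_{u\le w}$ of polynomials in $\mathbb{C}[t_1,\ldots,t_n]$ such that $p_u-p_{s_{jk}u}\in\langle t_j-t_k\rangle$ whenever $j<k$ and $u,s_{jk}u\le w$; $H^*_T(G/B)$ is the case of the longest permutation. $S_n$ acts on polynomials by $(u\cdot f)(t_1,\ldots,t_n)=f(t_{u(1)},\ldots,t_{u(n)})$, on $H^*_T(G/B)$ by $(u\cdot p)_v=u\cdot p_{u^{-1}v}$, and on $H^*_T(X_w)$ by $s\cdot\iota(p)=\iota(s\cdot p)$, where $\iota((p_u)_{u\in S_n})=(p_u)_{u\le w}$. The ordinary cohomology is $H^*(X_w)\cong H^*_T(X_w)/\langle t_1,\ldots,t_n\rangle H^*_T(X_w)$, with the $S_n$-action induced from that on $H^*_T(X_w)$. $1^d$ denotes the trivial representation in degree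 $d$. *)

theory Defs
  imports Complex_Main "HOL-Library.Poly_Mapping" "HOL-Combinatorics.Combinatorics"
begin

text \<open>Multivariate polynomials: finitely supported maps from monomials (exponent
vectors nat =>0 nat) to complex coefficients. We only use polynomials whose variables lie in {1..n}.\<close>

type_synonym mpoly = "(nat \<Rightarrow>\<^sub>0 nat) \<Rightarrow>\<^sub>0 complex"

definition var :: "nat \<Rightarrow> mpoly" where
  "var i = Poly_Mapping.single (Poly_Mapping.single i 1) 1"

definition polys :: "nat \<Rightarrow> mpoly set" where
  "polys n = {p. \<forall>m \<in> Poly_Mapping.keys p. Poly_Mapping.keys m \<subseteq> {1..n}}"

definition mono_deg :: "(nat \<Rightarrow>\<^sub>0 nat) \<Rightarrow> nat" where
  "mono_deg m = (\<Sum>i \<in> Poly_Mapping.keys m. Poly_Mapping.lookup m i)"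

text \<open>homogeneous of degree d (the zero polynomial is homogeneous of every degree)\<close>
definition homog :: "nat \<Rightarrow> mpoly \<Rightarrow> bool" where
  "homog d p \<longleftrightarrow> (\<forall>m \<in> Poly_Mapping.keys p. mono_deg m = d)"

text \<open>(u . f)(t_1,...,t_n) = f(t_{u(1)},...,t_{u(n)}): the monomial with exponent
vector m is sent to the one with exponent vector m o u^{-1}; hence the coefficient of
the monomial m' in u . f is the coefficient of m' o u in f.\<close>
definition poly_act :: "(nat \<Rightarrow> nat) \<Rightarrow> mpoly \<Rightarrow> mpoly" where
  "poly_act u f = Poly_Mapping.map_key (Poly_Mapping.map_key u) f"

text \<open>S_n = permutations of {1..n} (identity outside), acting on vectors by
w e_i = e_{w(i)}; s_{jk} is the transposition of j and k.\<close>

definition Sn :: "nat \<Rightarrow> (nat \<Rightarrow> nat) set" where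
  "Sn n = {u. u permutes {1..n}}"

definition len :: "nat \<Rightarrow> (nat \<Rightarrow> nat) \<Rightarrow> nat" where
  "len n v = card {(i, j). 1 \<le> i \<and> i < j \<and> j \<le> n \<and> inv v i > inv v j}"

definition longest :: "nat \<Rightarrow> nat \<Rightarrow> nat" where
  "longest n = (\<lambda>i. if 1 \<le> i \<and> i \<le> n then n + 1 - i else i)"

definition bruhat_step :: "nat \<Rightarrow> (nat \<Rightarrow> nat) \<Rightarrow> (nat \<Rightarrow> nat) \<Rightarrow> bool" where
  "bruhat_step n u u' \<longleftrightarrow> u \<in> Sn n \<and>
     (\<exists>j k. 1 \<le> j \<and> j < k \<and> k \<le> n \<and> u' = Transposition.transpose j k \<circ> u \<and> len n u < len n u')"

definition bruhat_le :: "nat \<Rightarrow> (nat \<Rightarrow> nat) \<Rightarrow> (nat \<Rightarrow> nat) \<Rightarrow> bool" where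
  "bruhat_le n v w \<longleftrightarrow> v \<in> Sn n \<and> w \<in> Sn n \<and> (bruhat_step n)\<^sup>*\<^sup>* v w"

text \<open>H_T(X_w): tuples (p_u)_{u <= w}, represented as functions on permutations that
vanish outside the Bruhat interval [e,w].\<close>
definition GKM :: "nat \<Rightarrow> (nat \<Rightarrow> nat) \<Rightarrow> ((nat \<Rightarrow> nat) \<Rightarrow> mpoly) set" where
  "GKM n w = {p. (\<forall>u. p u \<in> polys n) \<and> (\<forall>u. \<not> bruhat_le n u w \<longrightarrow> p u = 0) \<and>
     (\<forall>j k u. 1 \<le> j \<and> j < k \<and> k \<le> n \<and> bruhat_le n u w \<and>
        bruhat_le n (Transposition.transpose j k \<circ> u) w \<longrightarrow>
        (\<exists>q \<in> polys n. p u - p (Transposition.transpose j k \<circ> u) = (var j - var k) * q))}"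

definition GKM_flag :: "nat \<Rightarrow> ((nat \<Rightarrow> nat) \<Rightarrow> mpoly) set" where
  "GKM_flag n = GKM n (longest n)"

definition restr :: "nat \<Rightarrow> (nat \<Rightarrow> nat) \<Rightarrow> ((nat \<Rightarrow> nat) \<Rightarrow> mpoly) \<Rightarrow> ((nat \<Rightarrow> nat) \<Rightarrow> mpoly)" where
  "restr n w p = (\<lambda>u. if bruhat_le n u w then p u else 0)"

definition flag_act :: "nat \<Rightarrow> (nat \<Rightarrow> nat) \<Rightarrow> ((nat \<Rightarrow> nat) \<Rightarrow> mpoly) \<Rightarrow> ((nat \<Rightarrow> nat) \<Rightarrow> mpoly)" where
  "flag_act n u p = (\<lambda>v. if v \<in> Sn n then poly_act u (p (inv u \<circ> v)) else 0)"

definition GKM_deg :: "nat \<Rightarrow> (nat \<Rightarrow> nat) \<Rightarrow> nat \<Rightarrow> ((nat \<Rightarrow> nat) \<Rightarrow> mpoly) set" where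
  "GKM_deg n w d = {p \<in> GKM n w. \<forall>u. homog d (p u)}"

definition tGKM :: "nat \<Rightarrow> (nat \<Rightarrow> nat) \<Rightarrow> ((nat \<Rightarrow> nat) \<Rightarrow> mpoly) set" where
  "tGKM n w = {x. \<exists>y. (\<forall>i. y i \<in> GKM n w) \<and> x = (\<lambda>u. \<Sum>i = 1..n. var i * y i u)}"

end

theory Submission
  imports Defs "HOL-Library.Function_Algebras"
begin


abbreviation lk :: "('a \<Rightarrow>\<^sub>0 'b::zero) \<Rightarrow> 'a \<Rightarrow> 'b" where "lk \<equiv> Poly_Mapping.lookup"
abbreviation ks :: "('a \<Rightarrow>\<^sub>0 'b::zero) \<Rightarrow> 'a set" where "ks \<equiv> Poly_Mapping.keys"
abbreviation sng :: "'a \<Rightarrow> 'b \<Rightarrow> ('a \<Rightarrow>\<^sub>0 'b::zero)" where "sng \<equiv> Poly_Mapping.single"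

definition cst :: "complex \<Rightarrow> mpoly" where "cst c = sng 0 c"
definition monom :: "(nat \<Rightarrow>\<^sub>0 nat) \<Rightarrow> mpoly" where "monom m = sng m 1"

lemma lk_sum: "lk (sum f A) k = (\<Sum>x\<in>A. lk (f x) k)"
  by (rule lookup_sum)

lemma poly_sum_singles: "(p::'a \<Rightarrow>\<^sub>0 'b::comm_monoid_add) = (\<Sum>m\<in>ks p. sng m (lk p m))"
proof (rule poly_mapping_eqI)
  fix k
  show "lk p k = lk (\<Sum>m\<in>ks p. sng m (lk p m)) k"
  proof (cases "k \<in> ks p")
    case True
    then show ?thesis
      by (simp add: lookup_sum lookup_single when_def sum.delta)
  next
    case False
    then show ?thesis
      by (auto simp add: lookup_sum lookup_single when_def in_keys_iff)
  qed
qed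

lemma single_split: "sng m c = cst c * monom m"
  by (simp add: cst_def monom_def mult_single)

lemma monom_add: "monom (a + b) = monom a * monom b"
  by (simp add: monom_def mult_single)

lemma monom_zero: "monom 0 = 1"
  by (simp add: monom_def)

lemma cst_mult: "cst (a * b) = cst a * cst b"
  by (simp add: cst_def mult_single)

lemma cst_add: "cst (a + b) = cst a + cst b"
  by (simp add: cst_def single_add)

lemma cst_0[simp]: "cst 0 = 0" by (simp add: cst_def)
lemma cst_1[simp]: "cst 1 = 1" by (simp add: cst_def)

lemma lk_cst_mult: "lk (cst c * q) m = c * lk q m"
proof -
  have "cst c * q = Poly_Mapping.map ((*) c) q"
    by (simp add: cst_def mult_map_scale_conv_mult)
  then show ?thesis
    by (simp add: Poly_Mapping.map.rep_eq when_def)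
qed

lemma additive_sum:
  fixes A :: "mpoly \<Rightarrow> mpoly"
  assumes add: "\<And>x y. A (x + y) = A x + A y"
  shows "A (sum f S) = (\<Sum>s\<in>S. A (f s))"
proof -
  have A0: "A 0 = 0" using add[of 0 0] by simp
  show ?thesis
    by (induction S rule: infinite_finite_induct) (auto simp: A0 add)
qed

lemma additive_mult:
  fixes A :: "mpoly \<Rightarrow> mpoly"
  assumes add: "\<And>x y. A (x + y) = A x + A y"
    and mon: "\<And>m c m' c'. A (sng m c * sng m' c') = A (sng m c) * A (sng m' c')"
  shows "A (p * q) = A p * A q"
proof -
  have "p * q = (\<Sum>m\<in>ks p. sng m (lk p m)) * (\<Sum>m'\<in>ks q. sng m' (lk q m'))"
    using poly_sum_singles[of p] poly_sum_singles[of q] by simp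
  also have "\<dots> = (\<Sum>m\<in>ks p. \<Sum>m'\<in>ks q. sng m (lk p m) * sng m' (lk q m'))"
    by (simp add: sum_product)
  finally have pq: "p * q = \<dots>" .
  have "A (p * q) = (\<Sum>m\<in>ks p. \<Sum>m'\<in>ks q. A (sng m (lk p m)) * A (sng m' (lk q m')))"
    unfolding pq by (simp add: additive_sum[OF add] mon)
  also have "\<dots> = (\<Sum>m\<in>ks p. A (sng m (lk p m))) * (\<Sum>m'\<in>ks q. A (sng m' (lk q m')))"
    by (simp add: sum_product)
  also have "\<dots> = A p * A q"
  proof -
    have "A p = A (\<Sum>m\<in>ks p. sng m (lk p m))" using poly_sum_singles[of p] by (rule arg_cong)
    moreover have "A q = A (\<Sum>m\<in>ks q. sng m (lk q m))" using poly_sum_singles[of q] by (rule arg_cong)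
    ultimately show ?thesis by (simp add: additive_sum[OF add])
  qed
  finally show ?thesis .
qed

definition ext :: "((nat \<Rightarrow>\<^sub>0 nat) \<Rightarrow> mpoly) \<Rightarrow> mpoly \<Rightarrow> mpoly" where
  "ext F p = (\<Sum>m\<in>ks p. cst (lk p m) * F m)"

lemma ext_single: "ext F (sng m c) = cst c * F m"
  by (simp add: ext_def)

lemma ext_add: "ext F (p + q) = ext F p + ext F q"
  unfolding ext_def
  by (rule setsum_keys_plus_distrib) (simp_all add: cst_add distrib_right)

lemma ext_0[simp]: "ext F 0 = 0" by (simp add: ext_def)

lemma ext_uminus: "ext F (- p) = - ext F p"
  using ext_add[of F p "-p"] by (simp add: add_eq_0_iff)

lemma ext_diff: "ext F (p - q) = ext F p - ext F q"
  using ext_add[of F p "-q"] ext_uminus[of F q] by simp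

lemma ext_sum: "ext F (sum f S) = (\<Sum>s\<in>S. ext F (f s))"
  by (rule additive_sum) (rule ext_add)

lemma ext_mult:
  assumes "\<And>a b. F (a + b) = F a * F b"
  shows "ext F (p * q) = ext F p * ext F q"
proof (rule additive_mult)
  show "ext F (x + y) = ext F x + ext F y" for x y by (rule ext_add)
  show "ext F (sng m c * sng m' c') = ext F (sng m c) * ext F (sng m' c')" for m c m' c'
    by (simp add: mult_single ext_single assms cst_mult algebra_simps)
qed

lemma ext_one: "ext F 1 = F 0"
proof -
  have "(1::mpoly) = sng 0 1" by simp
  then show ?thesis by (metis ext_single cst_1 mult_1)
qed

lemma ext_monom_id: "ext monom p = p"
  unfolding ext_def by (subst (3) poly_sum_singles) (simp add: single_split[symmetric])

lemma var_monom: "var i = monom (sng i 1)"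
  by (simp add: var_def monom_def)

lemma var_inj: "var i = var j \<Longrightarrow> i = j"
proof -
  assume h: "var i = var j"
  have "lk (var i) (sng i 1) = 1" by (simp add: var_def)
  then have "lk (var j) (sng i 1) = 1" using h by simp
  then have "sng j (1::nat) = sng i 1" by (simp add: var_def lookup_single when_def split: if_splits)
  then have "lk (sng j (1::nat)) j = lk (sng i 1) j" by simp
  then show "i = j" by (simp add: lookup_single when_def split: if_splits)
qed

lemma var_pow: "var i ^ e = monom (sng i e)"
proof (induction e)
  case 0 then show ?case by (simp add: monom_zero)
next
  case (Suc e)
  have "sng i (Suc e) = sng i e + sng i 1" by (simp add: single_add[symmetric])
  then show ?case using Suc by (simp add: monom_add var_monom mult.commute)
qed

lemma var_diff_nz: "a \<noteq> b \<Longrightarrow> var a - var b \<noteq> 0"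
  using var_inj by force

lemma polysI: "(\<And>m. m \<in> ks p \<Longrightarrow> ks m \<subseteq> {1..n}) \<Longrightarrow> p \<in> polys n"
  by (auto simp: polys_def)

lemma polysD: "p \<in> polys n \<Longrightarrow> m \<in> ks p \<Longrightarrow> ks m \<subseteq> {1..n}"
  by (auto simp: polys_def)

lemma keys_add_nat: "ks ((a::nat \<Rightarrow>\<^sub>0 nat) + b) = ks a \<union> ks b"
  by (auto simp: in_keys_iff lookup_add)

lemma polys_0[simp]: "0 \<in> polys n" by (simp add: polys_def)
lemma polys_1[simp]: "1 \<in> polys n" by (simp add: polys_def)
lemma polys_cst[simp]: "cst c \<in> polys n" by (simp add: polys_def cst_def)
lemma polys_var: "i \<in> {1..n} \<Longrightarrow> var i \<in> polys n" by (simp add: polys_def var_def)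
lemma polys_monom: "ks m \<subseteq> {1..n} \<Longrightarrow> monom m \<in> polys n" by (simp add: polys_def monom_def)

lemma polys_add[simp]: "p \<in> polys n \<Longrightarrow> q \<in> polys n \<Longrightarrow> p + q \<in> polys n"
proof (rule polysI)
  fix m assume "p \<in> polys n" "q \<in> polys n" "m \<in> ks (p + q)"
  then show "ks m \<subseteq> {1..n}" using keys_add[of p q] polysD by blast
qed

lemma polys_uminus[simp]: "p \<in> polys n \<Longrightarrow> - p \<in> polys n"
proof (rule polysI)
  fix m assume "p \<in> polys n" "m \<in> ks (- p)"
  then show "ks m \<subseteq> {1..n}" using polysD[of p n m] by (simp add: in_keys_iff)
qed

lemma polys_diff[simp]: "p \<in> polys n \<Longrightarrow> q \<in> polys n \<Longrightarrow> p - q \<in> polys n"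
  using polys_add[of p n "-q"] by simp

lemma polys_mult[simp]: "p \<in> polys n \<Longrightarrow> q \<in> polys n \<Longrightarrow> p * q \<in> polys n"
proof (rule polysI)
  fix m assume p: "p \<in> polys n" and q: "q \<in> polys n" and m: "m \<in> ks (p * q)"
  then obtain a b where "m = a + b" "a \<in> ks p" "b \<in> ks q" using keys_mult by blast
  then show "ks m \<subseteq> {1..n}" using p q polysD[of p n a] polysD[of q n b] by (simp add: keys_add_nat)
qed

lemma polys_sum: "(\<And>i. i \<in> S \<Longrightarrow> f i \<in> polys n) \<Longrightarrow> sum f S \<in> polys n"
  by (induction S rule: infinite_finite_induct) auto

lemma polys_prod: "(\<And>i. i \<in> S \<Longrightarrow> f i \<in> polys n) \<Longrightarrow> prod f S \<in> polys n"
  by (induction S rule: infinite_finite_induct) auto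

lemma polys_power: "p \<in> polys n \<Longrightarrow> p ^ e \<in> polys n"
  by (induction e) auto

subsection \<open>Substitution of a variable by another\<close>

definition smon :: "nat \<Rightarrow> nat \<Rightarrow> (nat \<Rightarrow>\<^sub>0 nat) \<Rightarrow> (nat \<Rightarrow>\<^sub>0 nat)" where
  "smon a b m = Poly_Mapping.update b 0 (Poly_Mapping.update a (lk m a + lk m b) m)"

lemma lk_smon: "a \<noteq> b \<Longrightarrow> lk (smon a b m) k = (if k = b then 0 else if k = a then lk m a + lk m b else lk m k)"
  by (auto simp: smon_def lookup_update)

lemma smon_add: "a \<noteq> b \<Longrightarrow> smon a b (x + y) = smon a b x + smon a b y"
  by (rule poly_mapping_eqI) (simp add: lk_smon lookup_add)

definition sub :: "nat \<Rightarrow> nat \<Rightarrow> mpoly \<Rightarrow> mpoly" where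
  "sub a b = ext (\<lambda>m. monom (smon a b m))"

lemma sub_add: "sub a b (p + q) = sub a b p + sub a b q"
  by (simp add: sub_def ext_add)

lemma sub_diff: "sub a b (p - q) = sub a b p - sub a b q"
  by (simp add: sub_def ext_diff)

lemma sub_mult: "a \<noteq> b \<Longrightarrow> sub a b (p * q) = sub a b p * sub a b q"
  unfolding sub_def by (rule ext_mult) (simp add: smon_add monom_add)

lemma sub_var: "a \<noteq> b \<Longrightarrow> sub a b (var i) = var (if i = b then a else i)"
proof -
  assume ab: "a \<noteq> b"
  have "smon a b (sng i 1) = sng (if i = b then a else i) 1"
    by (rule poly_mapping_eqI) (use ab in \<open>auto simp: lk_smon lookup_single when_def\<close>)
  then show ?thesis by (simp add: sub_def var_def ext_single monom_def)
qed

lemma sub_alpha: "a \<noteq> b \<Longrightarrow> sub a b (var a - var b) = 0"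
  by (simp add: sub_diff sub_var)

lemma sub_one: "a \<noteq> b \<Longrightarrow> sub a b 1 = 1"
proof -
  assume ab: "a \<noteq> b"
  have "smon a b 0 = 0" by (rule poly_mapping_eqI) (simp add: lk_smon[OF ab])
  then show ?thesis by (simp add: sub_def ext_one monom_zero)
qed

lemma dvd_sub_zero: "a \<noteq> b \<Longrightarrow> (var a - var b) dvd p \<Longrightarrow> sub a b p = 0"
  by (auto simp: sub_mult sub_alpha)

lemma monom_sub_dvd:
  assumes ab: "a \<noteq> b"
  shows "(var a - var b) dvd (monom m - monom (smon a b m))"
proof -
  define m0 where "m0 = Poly_Mapping.update b 0 m"
  define e where "e = lk m b"
  have m: "m = m0 + sng b e"
    by (rule poly_mapping_eqI) (auto simp: m0_def e_def lookup_add lookup_update lookup_single when_def)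
  have sm: "smon a b m = m0 + sng a e"
    by (rule poly_mapping_eqI) (use ab in \<open>auto simp: m0_def e_def lookup_add lookup_update lookup_single when_def lk_smon\<close>)
  define S where "S = (\<Sum>i<e. var a ^ (e - Suc i) * var b ^ i)"
  have "monom m - monom (smon a b m) = monom m0 * (var b ^ e - var a ^ e)"
    by (subst m, subst sm) (simp add: monom_add var_pow algebra_simps)
  also have "var b ^ e - var a ^ e = (var b - var a) * S"
    unfolding S_def by (rule power_diff_sumr2)
  finally have eq: "monom m - monom (smon a b m) = monom m0 * ((var b - var a) * S)" .
  have "monom m - monom (smon a b m) = (var a - var b) * (- (monom m0 * S))"
    unfolding eq by (simp add: algebra_simps)
  then show ?thesis by (rule dvdI)
qed

lemma sub_zero_dvd:
  assumes ab: "a \<noteq> b" and z: "sub a b p = 0"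
  shows "(var a - var b) dvd p"
proof -
  have "p - sub a b p = (\<Sum>m\<in>ks p. cst (lk p m) * (monom m - monom (smon a b m)))"
    unfolding sub_def ext_def
    by (subst (1) poly_sum_singles) (simp add: single_split sum_subtractf[symmetric] algebra_simps)
  also have "(var a - var b) dvd \<dots>"
    by (rule dvd_sum) (rule dvd_mult, rule monom_sub_dvd[OF ab])
  finally show ?thesis using z by simp
qed

lemma alpha_prime:
  assumes ab: "a \<noteq> b" and d: "(var a - var b) dvd (x * y)"
  shows "(var a - var b) dvd x \<or> (var a - var b) dvd y"
proof -
  have "sub a b x * sub a b y = 0" using dvd_sub_zero[OF ab d] by (simp add: sub_mult[OF ab])
  then have "sub a b x = 0 \<or> sub a b y = 0" by simp
  then show ?thesis using sub_zero_dvd[OF ab] by blast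
qed

lemma alpha_not_dvd:
  assumes ab: "a \<noteq> b" and cd: "c \<noteq> d" and ne: "{a, b} \<noteq> {c, d}"
  shows "\<not> (var a - var b) dvd (var c - var d)"
proof
  assume "(var a - var b) dvd (var c - var d)"
  then have "sub a b (var c - var d) = 0" by (rule dvd_sub_zero[OF ab])
  then have "var (if c = b then a else c) = var (if d = b then a else d)"
    by (simp add: sub_diff sub_var[OF ab])
  then have "(if c = b then a else c) = (if d = b then a else d)" by (rule var_inj)
  then show False using ab cd ne by (auto split: if_splits)
qed

lemma alpha_dvd_prod:
  assumes fin: "finite I"
    and ne: "\<And>i. i \<in> I \<Longrightarrow> f i \<noteq> g i"
    and ne2: "\<And>i i'. i \<in> I \<Longrightarrow> i' \<in> I \<Longrightarrow> i \<noteq> i' \<Longrightarrow> {f i, g i} \<noteq> {f i', g i'}"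
    and i0: "i0 \<notin> I" and ne0: "f i0 \<noteq> g i0"
    and ne02: "\<And>i. i \<in> I \<Longrightarrow> {f i, g i} \<noteq> {f i0, g i0}"
    and d: "(var (f i0) - var (g i0)) dvd (\<Prod>i\<in>I. var (f i) - var (g i))"
  shows False
  using fin ne ne2 ne02 d
proof (induction I rule: finite_induct)
  case empty
  then have "(var (f i0) - var (g i0)) dvd 1" by simp
  then have "sub (f i0) (g i0) 1 = 0" using dvd_sub_zero[OF ne0] by blast
  then show ?case by (simp add: sub_one[OF ne0])
next
  case (insert x F)
  have "(var (f i0) - var (g i0)) dvd ((var (f x) - var (g x)) * (\<Prod>i\<in>F. var (f i) - var (g i)))"
    using insert.prems(4) insert.hyps by simp
  then have "(var (f i0) - var (g i0)) dvd (var (f x) - var (g x)) \<or>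
             (var (f i0) - var (g i0)) dvd (\<Prod>i\<in>F. var (f i) - var (g i))"
    by (rule alpha_prime[OF ne0])
  then show ?case
  proof
    assume "(var (f i0) - var (g i0)) dvd (var (f x) - var (g x))"
    moreover have "\<not> (var (f i0) - var (g i0)) dvd (var (f x) - var (g x))"
    proof (rule alpha_not_dvd[OF ne0])
      show "f x \<noteq> g x" using insert.prems(1) by simp
      have "{f x, g x} \<noteq> {f i0, g i0}" using insert.prems(3)[of x] by simp
      then show "{f i0, g i0} \<noteq> {f x, g x}" by metis
    qed
    ultimately show False by blast
  next
    assume "(var (f i0) - var (g i0)) dvd (\<Prod>i\<in>F. var (f i) - var (g i))"
    moreover have "\<And>i. i \<in> F \<Longrightarrow> f i \<noteq> g i" using insert.prems(1) by simp
    moreover have "\<And>i i'. i \<in> F \<Longrightarrow> i' \<in> F \<Longrightarrow> i \<noteq> i' \<Longrightarrow> {f i, g i} \<noteq> {f i', g i'}"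
      using insert.prems(2) by simp
    moreover have "\<And>i. i \<in> F \<Longrightarrow> {f i, g i} \<noteq> {f i0, g i0}" using insert.prems(3) by simp
    ultimately show False using insert.IH by blast
  qed
qed

lemma prod_alpha_dvd:
  assumes fin: "finite I"
    and ne: "\<And>i. i \<in> I \<Longrightarrow> f i \<noteq> g i"
    and ne2: "\<And>i i'. i \<in> I \<Longrightarrow> i' \<in> I \<Longrightarrow> i \<noteq> i' \<Longrightarrow> {f i, g i} \<noteq> {f i', g i'}"
    and d: "\<And>i. i \<in> I \<Longrightarrow> (var (f i) - var (g i)) dvd p"
  shows "(\<Prod>i\<in>I. var (f i) - var (g i)) dvd p"
  using fin ne ne2 d
proof (induction I rule: finite_induct)
  case empty then show ?case by simp
next
  case (insert x F)
  have "(\<Prod>i\<in>F. var (f i) - var (g i)) dvd p" by (rule insert.IH) (use insert.prems in auto)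
  then obtain r where r: "p = (\<Prod>i\<in>F. var (f i) - var (g i)) * r" by blast
  have nx: "f x \<noteq> g x" using insert.prems by auto
  have "(var (f x) - var (g x)) dvd (\<Prod>i\<in>F. var (f i) - var (g i)) * r"
    using insert.prems(3) r by auto
  then have "(var (f x) - var (g x)) dvd (\<Prod>i\<in>F. var (f i) - var (g i)) \<or> (var (f x) - var (g x)) dvd r"
    by (rule alpha_prime[OF nx])
  then have "(var (f x) - var (g x)) dvd r"
  proof
    assume a: "(var (f x) - var (g x)) dvd (\<Prod>i\<in>F. var (f i) - var (g i))"
    have False
      by (rule alpha_dvd_prod[OF insert.hyps(1) _ _ insert.hyps(2) nx _ a])
         (use insert.prems in \<open>auto\<close>, metis insert.hyps(2) insert.prems(2) insertCI)
    then show ?thesis ..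
  qed
  then obtain r' where r': "r = (var (f x) - var (g x)) * r'" by blast
  have "p = (\<Prod>i\<in>F. var (f i) - var (g i)) * ((var (f x) - var (g x)) * r')"
    using r r' by simp
  also have "\<dots> = ((var (f x) - var (g x)) * (\<Prod>i\<in>F. var (f i) - var (g i))) * r'"
    by (simp only: ac_simps)
  also have "\<dots> = (\<Prod>i\<in>insert x F. var (f i) - var (g i)) * r'"
    using insert.hyps by simp
  finally have "p = (\<Prod>i\<in>insert x F. var (f i) - var (g i)) * r'" .
  then show ?case by (rule dvdI)
qed


definition pmon :: "nat \<Rightarrow> (nat \<Rightarrow>\<^sub>0 nat) \<Rightarrow> mpoly" where
  "pmon n m = (if ks m \<subseteq> {1..n} then monom m else 0)"

definition proj :: "nat \<Rightarrow> mpoly \<Rightarrow> mpoly" where "proj n = ext (pmon n)"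

lemma pmon_add: "pmon n (a + b) = pmon n a * pmon n b"
  by (simp add: pmon_def keys_add_nat monom_add)

lemma proj_mult: "proj n (p * q) = proj n p * proj n q"
  unfolding proj_def by (rule ext_mult) (rule pmon_add)

lemma proj_polys: "proj n p \<in> polys n"
  unfolding proj_def ext_def
  by (rule polys_sum) (simp add: pmon_def polys_monom)

lemma proj_id: "p \<in> polys n \<Longrightarrow> proj n p = p"
proof -
  assume p: "p \<in> polys n"
  have "proj n p = ext monom p"
    unfolding proj_def ext_def
    by (rule sum.cong) (use polysD[OF p] in \<open>auto simp: pmon_def\<close>)
  then show ?thesis by (simp add: ext_monom_id)
qed

lemma mono_deg_sup: "finite K \<Longrightarrow> ks m \<subseteq> K \<Longrightarrow> mono_deg m = (\<Sum>i\<in>K. lk m i)"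
  unfolding mono_deg_def
  by (rule sum.mono_neutral_left) (auto simp: in_keys_iff)

lemma mono_deg_add: "mono_deg (a + b) = mono_deg a + mono_deg b"
proof -
  let ?K = "ks a \<union> ks b"
  have "mono_deg (a + b) = (\<Sum>i\<in>?K. lk (a + b) i)"
    by (rule mono_deg_sup) (auto simp: keys_add_nat)
  also have "\<dots> = (\<Sum>i\<in>?K. lk a i) + (\<Sum>i\<in>?K. lk b i)"
    by (simp add: lookup_add sum.distrib)
  also have "\<dots> = mono_deg a + mono_deg b"
    by (simp add: mono_deg_sup[symmetric])
  finally show ?thesis .
qed

lemma mono_deg_0[simp]: "mono_deg 0 = 0" by (simp add: mono_deg_def)
lemma mono_deg_single[simp]: "mono_deg (sng i e) = e"
  by (simp add: mono_deg_def)

lemma homog_0[simp]: "homog d 0" by (simp add: homog_def)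
lemma homog_cst: "homog 0 (cst c)" by (simp add: homog_def cst_def)
lemma homog_1: "homog 0 1" by (simp add: homog_def)
lemma homog_var: "homog 1 (var i)" by (simp add: homog_def var_def)

lemma homog_add: "homog d p \<Longrightarrow> homog d q \<Longrightarrow> homog d (p + q)"
  unfolding homog_def using keys_add[of p q] by blast

lemma homog_uminus: "homog d p \<Longrightarrow> homog d (- p)"
  unfolding homog_def by (simp add: in_keys_iff)

lemma homog_diff: "homog d p \<Longrightarrow> homog d q \<Longrightarrow> homog d (p - q)"
  using homog_add[of d p "-q"] homog_uminus[of d q] by simp

lemma homog_mult: "homog d p \<Longrightarrow> homog e q \<Longrightarrow> homog (d + e) (p * q)"
  unfolding homog_def
proof
  fix m assume p: "\<forall>m\<in>ks p. mono_deg m = d" and q: "\<forall>m\<in>ks q. mono_deg m = e" and m: "m \<in> ks (p * q)"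
  then obtain a b where "m = a + b" "a \<in> ks p" "b \<in> ks q" using keys_mult by blast
  then show "mono_deg m = d + e" using p q by (simp add: mono_deg_add)
qed

lemma homog_cst_mult: "homog d p \<Longrightarrow> homog d (cst c * p)"
  using homog_mult[OF homog_cst[of c]] by simp

lemma homog_sum: "(\<And>i. i \<in> S \<Longrightarrow> homog d (f i)) \<Longrightarrow> homog d (sum f S)"
  by (induction S rule: infinite_finite_induct) (auto intro: homog_add)

lemma homog_prod_alpha: "finite I \<Longrightarrow> homog (card I) (\<Prod>i\<in>I. var (f i) - var (g i))"
proof (induction I rule: finite_induct)
  case empty then show ?case by (simp add: homog_1)
next
  case (insert x F)
  then show ?case
    using homog_mult[OF homog_diff[OF homog_var homog_var] insert.IH] by simp
qed

definition hc :: "nat \<Rightarrow> mpoly \<Rightarrow> mpoly" where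
  "hc e p = (\<Sum>m\<in>{m\<in>ks p. mono_deg m = e}. sng m (lk p m))"

lemma lk_hc: "lk (hc e p) k = (if mono_deg k = e then lk p k else 0)"
proof -
  have "lk (hc e p) k = (\<Sum>m\<in>{m\<in>ks p. mono_deg m = e}. if m = k then lk p m else 0)"
    unfolding hc_def by (simp add: lookup_sum lookup_single when_def eq_commute)
  also have "\<dots> = (if k \<in> {m\<in>ks p. mono_deg m = e} then lk p k else 0)"
    by (rule sum.delta) simp
  finally show ?thesis by (simp add: in_keys_iff)
qed

lemma hc_add: "hc e (p + q) = hc e p + hc e q"
  by (rule poly_mapping_eqI) (simp add: lk_hc lookup_add)

lemma hc_sum: "hc e (sum f S) = (\<Sum>s\<in>S. hc e (f s))"
  by (rule additive_sum) (rule hc_add)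

lemma hc_homog: "homog d p \<Longrightarrow> hc e p = (if e = d then p else 0)"
  by (rule poly_mapping_eqI) (auto simp: lk_hc homog_def in_keys_iff)

lemma hc_polys: "p \<in> polys n \<Longrightarrow> hc e p \<in> polys n"
  unfolding polys_def by (auto simp: in_keys_iff lk_hc split: if_splits)

lemma lk_hc0: "lk (hc e p) 0 = (if e = 0 then lk p 0 else 0)"
  by (simp add: lk_hc)

lemma hc_mult_homog:
  assumes h: "homog l h"
  shows "hc e (g * h) = (if l \<le> e then hc (e - l) g * h else 0)"
proof -
  have hm: "homog (mono_deg m + l) (sng m c * h)" for m c
  proof -
    have hs: "homog (mono_deg m) (sng m c)" by (simp add: homog_def)
    show ?thesis by (rule homog_mult[OF hs h])
  qed
  have "hc e (g * h) = hc e ((\<Sum>m\<in>ks g. sng m (lk g m)) * h)"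
    using poly_sum_singles[of g] by (rule arg_cong)
  also have "\<dots> = (\<Sum>m\<in>ks g. hc e (sng m (lk g m) * h))"
    by (simp only: sum_distrib_right hc_sum)
  also have "\<dots> = (\<Sum>m\<in>ks g. if e = mono_deg m + l then sng m (lk g m) * h else 0)"
    by (rule sum.cong[OF refl]) (simp only: hc_homog[OF hm])
  finally have eq: "hc e (g * h) = (\<Sum>m\<in>ks g. if e = mono_deg m + l then sng m (lk g m) * h else 0)" .
  show ?thesis
  proof (cases "l \<le> e")
    case True
    have c: "(e = mono_deg m + l) = (mono_deg m = e - l)" for m using True by arith
    have "hc (e - l) g * h = (\<Sum>m\<in>{m\<in>ks g. mono_deg m = e - l}. sng m (lk g m)) * h"
      by (simp only: hc_def)
    also have "\<dots> = (\<Sum>m\<in>{m\<in>ks g. mono_deg m = e - l}. sng m (lk g m) * h)"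
      by (rule sum_distrib_right)
    also have "\<dots> = (\<Sum>m\<in>ks g. if mono_deg m = e - l then sng m (lk g m) * h else 0)"
      by (rule sum.inter_filter) simp
    also have "\<dots> = hc e (g * h)"
      unfolding eq c ..
    finally show ?thesis using True by simp
  next
    case False
    have "(\<Sum>m\<in>ks g. if e = mono_deg m + l then sng m (lk g m) * h else 0) = 0"
      by (rule sum.neutral) (use False in auto)
    then show ?thesis using False eq by simp
  qed
qed

lemma zc_decomp:
  assumes p: "p \<in> polys n" and z: "lk p 0 = 0"
  shows "\<exists>h. (\<forall>i. h i \<in> polys n) \<and> p = (\<Sum>i=1..n. var i * h i)"
proof -
  define im where "im m = Min (ks m)" for m :: "nat \<Rightarrow>\<^sub>0 nat"
  define dec where "dec m = Poly_Mapping.update (im m) (lk m (im m) - 1) m" for m :: "nat \<Rightarrow>\<^sub>0 nat"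
  have key: "sng m c = var (im m) * sng (dec m) c" if "m \<noteq> 0" for m c
  proof -
    have ne: "ks m \<noteq> {}" using that by simp
    then have "im m \<in> ks m" by (simp add: im_def)
    then have pos: "lk m (im m) \<ge> 1" by (simp add: in_keys_iff)
    have "m = sng (im m) 1 + dec m"
      by (rule poly_mapping_eqI) (use pos in \<open>auto simp: dec_def lookup_add lookup_update lookup_single when_def\<close>)
    then have "sng m c = sng (sng (im m) 1 + dec m) (1 * c)" by simp
    then show ?thesis by (simp only: mult_single[symmetric] var_def)
  qed
  have imn: "im m \<in> {1..n}" if "m \<in> ks p" for m
  proof -
    have "m \<noteq> 0" using that z by (auto simp: in_keys_iff)
    then have "im m \<in> ks m" by (simp add: im_def)
    then show ?thesis using polysD[OF p that] by blast
  qed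
  have deck: "ks (dec m) \<subseteq> ks m" for m
    by (auto simp: dec_def in_keys_iff lookup_update split: if_splits)
  have key': "var (im m) * sng (dec m) c = sng m c" if "m \<in> ks p" for m c
  proof -
    have "m \<noteq> 0" using that z by (auto simp: in_keys_iff)
    then show ?thesis using key by simp
  qed
  define h where "h i = (\<Sum>m\<in>{m\<in>ks p. im m = i}. sng (dec m) (lk p m))" for i
  have sp: "sng (dec m) c \<in> polys n" if "m \<in> ks p" for m c
  proof (rule polysI)
    fix k assume "k \<in> ks (sng (dec m) c)"
    then have "k = dec m" by (simp split: if_splits)
    then show "ks k \<subseteq> {1..n}" using deck[of m] polysD[OF p that] by blast
  qed
  have "\<forall>i. h i \<in> polys n"
    unfolding h_def by (auto intro!: polys_sum sp)
  moreover have "p = (\<Sum>i=1..n. var i * h i)"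
  proof -
    have "(\<Sum>i=1..n. var i * h i) = (\<Sum>i=1..n. \<Sum>m\<in>{m\<in>ks p. im m = i}. var (im m) * sng (dec m) (lk p m))"
      unfolding h_def by (simp add: sum_distrib_left)
    also have "\<dots> = (\<Sum>i=1..n. \<Sum>m | m \<in> ks p \<and> im m = i. sng m (lk p m))"
      by (intro sum.cong refl) (simp add: key')
    also have "\<dots> = (\<Sum>m\<in>ks p. sng m (lk p m))"
      by (rule sum.group) (use imn in auto)
    finally show ?thesis using poly_sum_singles[of p] by simp
  qed
  ultimately show ?thesis by blast
qed

lemma inj_map_key_perm:
  assumes "bij u" shows "inj (Poly_Mapping.map_key u :: (nat \<Rightarrow>\<^sub>0 nat) \<Rightarrow> _)"
proof (rule injI)
  fix a b :: "nat \<Rightarrow>\<^sub>0 nat"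
  assume h: "Poly_Mapping.map_key u a = Poly_Mapping.map_key u b"
  have inj: "inj u" using assms bij_is_inj by blast
  show "a = b"
  proof (rule poly_mapping_eqI)
    fix k
    obtain j where "k = u j" using assms by (metis bij_pointE)
    have "lk (Poly_Mapping.map_key u a) j = lk (Poly_Mapping.map_key u b) j" using h by simp
    then show "lk a k = lk b k" using inj \<open>k = u j\<close> by (simp add: map_key.rep_eq)
  qed
qed

lemma lk_poly_act: "bij u \<Longrightarrow> lk (poly_act u f) m = lk f (Poly_Mapping.map_key u m)"
  unfolding poly_act_def by (simp add: map_key.rep_eq[OF inj_map_key_perm])

lemma lk_map_key: "inj u \<Longrightarrow> lk (Poly_Mapping.map_key u m) i = lk m (u i)"
  by (simp add: map_key.rep_eq)

lemma map_key_inv_cancel: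
  assumes "bij u" shows "Poly_Mapping.map_key u (Poly_Mapping.map_key (inv u) m) = (m :: nat \<Rightarrow>\<^sub>0 nat)"
proof -
  have "inj u" "inj (inv u)" using assms bij_is_inj bij_imp_bij_inv by blast+
  then show ?thesis
    by (intro poly_mapping_eqI) (simp add: lk_map_key assms bij_inv_eq_iff)
qed

lemma pa_single: "bij u \<Longrightarrow> poly_act u (sng m c) = sng (Poly_Mapping.map_key (inv u) m) c"
  by (rule poly_mapping_eqI) (auto simp: lk_poly_act lookup_single when_def map_key_inv_cancel
      bij_is_inj bij_imp_bij_inv lk_map_key inj_map_key_perm[THEN injD])

lemma pa_add: "bij u \<Longrightarrow> poly_act u (p + q) = poly_act u p + poly_act u q"
  by (rule poly_mapping_eqI) (simp add: lk_poly_act lookup_add)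

lemma pa_uminus: "bij u \<Longrightarrow> poly_act u (- p) = - poly_act u p"
  by (rule poly_mapping_eqI) (simp add: lk_poly_act)

lemma pa_diff: "bij u \<Longrightarrow> poly_act u (p - q) = poly_act u p - poly_act u q"
  by (rule poly_mapping_eqI) (simp add: lk_poly_act lookup_minus)

lemma pa_sum: "bij u \<Longrightarrow> poly_act u (sum f S) = (\<Sum>s\<in>S. poly_act u (f s))"
  by (rule additive_sum) (rule pa_add)

lemma pa_mult: "bij u \<Longrightarrow> poly_act u (p * q) = poly_act u p * poly_act u q"
proof (rule additive_mult)
  assume b: "bij u"
  show "poly_act u (x + y) = poly_act u x + poly_act u y" for x y by (rule pa_add[OF b])
  have inj: "inj (inv u)" using b bij_imp_bij_inv bij_is_inj by blast
  show "poly_act u (sng m c * sng m' c') = poly_act u (sng m c) * poly_act u (sng m' c')" for m c m' c'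
    by (simp add: mult_single pa_single[OF b] map_key_plus[OF inj])
qed

lemma pa_var: "bij u \<Longrightarrow> poly_act u (var i) = var (u i)"
proof -
  assume b: "bij u"
  have inj: "inj (inv u)" using b bij_imp_bij_inv bij_is_inj by blast
  have "Poly_Mapping.map_key (inv u) (sng i 1) = sng (u i) (1::nat)"
    by (rule poly_mapping_eqI) (auto simp: lk_map_key[OF inj] lookup_single when_def bij_inv_eq_iff[OF b])
  then show ?thesis by (simp add: var_def pa_single[OF b])
qed

lemma pa_cst: "bij u \<Longrightarrow> poly_act u (cst c) = cst c"
proof -
  assume b: "bij u"
  have "Poly_Mapping.map_key (inv u) 0 = (0 :: nat \<Rightarrow>\<^sub>0 nat)"
    using b bij_imp_bij_inv bij_is_inj map_key_zero by blast
  then show ?thesis by (simp add: cst_def pa_single[OF b])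
qed

lemma pa_lk0: "bij u \<Longrightarrow> lk (poly_act u p) 0 = lk p 0"
  by (simp add: lk_poly_act bij_is_inj map_key_zero)

lemma pa_polys:
  assumes u: "u permutes {1..n}" and p: "p \<in> polys n"
  shows "poly_act u p \<in> polys n"
proof (rule polysI)
  have b: "bij u" using u permutes_bij by blast
  fix m assume m: "m \<in> ks (poly_act u p)"
  then have "Poly_Mapping.map_key u m \<in> ks p" by (simp add: in_keys_iff lk_poly_act[OF b])
  then have k: "ks (Poly_Mapping.map_key u m) \<subseteq> {1..n}" using p polysD by blast
  show "ks m \<subseteq> {1..n}"
  proof
    fix i assume i: "i \<in> ks m"
    have "inv u i \<in> ks (Poly_Mapping.map_key u m)"
      using i b by (simp add: in_keys_iff lk_map_key bij_is_inj surj_f_inv_f[OF bij_is_surj[OF b]])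
    then have "inv u i \<in> {1..n}" using k by blast
    then show "i \<in> {1..n}"
      by (metis u permutes_inv permutes_in_image)
  qed
qed

lemma mono_deg_map_key:
  assumes b: "bij u" shows "mono_deg (Poly_Mapping.map_key u m) = mono_deg m"
proof -
  have inj: "inj u" using b bij_is_inj by blast
  have ks: "ks (Poly_Mapping.map_key u m) = u -` ks m" by (rule keys_map_key[OF inj])
  have "mono_deg (Poly_Mapping.map_key u m) = (\<Sum>i\<in>u -` ks m. lk m (u i))"
    unfolding mono_deg_def ks by (simp add: lk_map_key[OF inj])
  also have "\<dots> = (\<Sum>j\<in>ks m. lk m j)"
  proof (rule sum.reindex_bij_betw)
    show "bij_betw u (u -` ks m) (ks m)"
      using b by (auto simp: bij_betw_def bij_is_inj inj_on_def intro: bij_is_surj[THEN surjD] )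
  qed
  finally show ?thesis by (simp add: mono_deg_def)
qed

lemma pa_homog: "bij u \<Longrightarrow> homog d p \<Longrightarrow> homog d (poly_act u p)"
  unfolding homog_def
proof
  fix m assume b: "bij u" and h: "\<forall>m\<in>ks p. mono_deg m = d" and m: "m \<in> ks (poly_act u p)"
  then have "Poly_Mapping.map_key u m \<in> ks p" by (simp add: in_keys_iff lk_poly_act)
  then have "mono_deg (Poly_Mapping.map_key u m) = d" using h by blast
  then show "mono_deg m = d" by (simp add: mono_deg_map_key[OF b])
qed



abbreviation tr :: "nat \<Rightarrow> nat \<Rightarrow> nat \<Rightarrow> nat" where "tr \<equiv> Transposition.transpose"

definition Inv :: "nat \<Rightarrow> (nat \<Rightarrow> nat) \<Rightarrow> (nat \<times> nat) set" where
  "Inv n v = {(i, j). 1 \<le> i \<and> i < j \<and> j \<le> n \<and> inv v i > inv v j}"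

definition PInv :: "nat \<Rightarrow> (nat \<Rightarrow> nat) \<Rightarrow> (nat \<times> nat) set" where
  "PInv n v = {(a, b). 1 \<le> a \<and> a < b \<and> b \<le> n \<and> v a > v b}"

definition pairs :: "nat \<Rightarrow> (nat \<times> nat) set" where
  "pairs n = {(i, j). 1 \<le> i \<and> i < j \<and> j \<le> n}"

lemma finite_pairs: "finite (pairs n)"
  by (rule finite_subset[of _ "{1..n} \<times> {1..n}"]) (auto simp: pairs_def)

lemma Inv_sub: "Inv n v \<subseteq> pairs n" by (auto simp: Inv_def pairs_def)
lemma PInv_sub: "PInv n v \<subseteq> pairs n" by (auto simp: PInv_def pairs_def)
lemma finite_Inv: "finite (Inv n v)" using finite_subset[OF Inv_sub finite_pairs] .
lemma finite_PInv: "finite (PInv n v)" using finite_subset[OF PInv_sub finite_pairs] .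

lemma len_Inv: "len n v = card (Inv n v)"
  by (simp add: len_def Inv_def)

lemma len_le: "len n v \<le> card (pairs n)"
  unfolding len_Inv by (rule card_mono[OF finite_pairs Inv_sub])

lemma Sn_perm: "u \<in> Sn n \<Longrightarrow> u permutes {1..n}" by (simp add: Sn_def)

lemma Sn_bij: "u \<in> Sn n \<Longrightarrow> bij u" by (simp add: Sn_def permutes_bij)

lemma Sn_in: "u \<in> Sn n \<Longrightarrow> (u i \<in> {1..n}) = (i \<in> {1..n})"
  unfolding Sn_def mem_Collect_eq by (rule permutes_in_image)

lemma Sn_out: "u \<in> Sn n \<Longrightarrow> i \<notin> {1..n} \<Longrightarrow> u i = i"
  by (simp add: Sn_def permutes_not_in)

lemma Sn_inv: "u \<in> Sn n \<Longrightarrow> inv u \<in> Sn n"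
  by (simp add: Sn_def permutes_inv)

lemma Sn_inv_app: "u \<in> Sn n \<Longrightarrow> inv u (u i) = i"
  by (simp add: Sn_def permutes_inverses)

lemma Sn_app_inv: "u \<in> Sn n \<Longrightarrow> u (inv u i) = i"
  by (simp add: Sn_def permutes_inverses)

lemma Sn_comp: "u \<in> Sn n \<Longrightarrow> v \<in> Sn n \<Longrightarrow> u \<circ> v \<in> Sn n"
  by (simp add: Sn_def permutes_compose)

lemma Sn_tr: "j \<in> {1..n} \<Longrightarrow> k \<in> {1..n} \<Longrightarrow> tr j k \<in> Sn n"
  by (simp add: Sn_def permutes_swap_id)

lemma Sn_inj: "u \<in> Sn n \<Longrightarrow> u x = u y \<Longrightarrow> x = y"
  by (metis Sn_inv_app)

lemma finite_Sn: "finite (Sn n)"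
  by (simp add: Sn_def finite_permutations)

lemma inv_tr_comp: "u \<in> Sn n \<Longrightarrow> inv (tr j k \<circ> u) = inv u \<circ> tr j k"
  by (simp add: o_inv_distrib Sn_bij)

lemma card_PInv: assumes u: "u \<in> Sn n" shows "card (PInv n u) = len n u"
proof -
  have "bij_betw (\<lambda>(a, b). (u b, u a)) (PInv n u) (Inv n u)"
  proof (rule bij_betw_byWitness[where f' = "\<lambda>(i, j). (inv u j, inv u i)"])
    show "\<forall>a\<in>PInv n u. (\<lambda>(i, j). (inv u j, inv u i)) ((\<lambda>(a, b). (u b, u a)) a) = a"
      using u by (simp add: split_beta Sn_inv_app[OF u] Sn_app_inv[OF u])
    show "\<forall>a'\<in>Inv n u. (\<lambda>(a, b). (u b, u a)) ((\<lambda>(i, j). (inv u j, inv u i)) a') = a'"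
      using u by (simp add: split_beta Sn_inv_app[OF u] Sn_app_inv[OF u])
    show "(\<lambda>(a, b). (u b, u a)) ` PInv n u \<subseteq> Inv n u"
    proof
      fix x assume "x \<in> (\<lambda>(a, b). (u b, u a)) ` PInv n u"
      then obtain a b where x: "x = (u b, u a)" and ab: "1 \<le> a" "a < b" "b \<le> n" "u a > u b"
        by (auto simp: PInv_def)
      have "u b \<in> {1..n}" using Sn_in[OF u, of b] ab by auto
      then show "x \<in> Inv n u" using x ab u Sn_in[OF u, of a] by (auto simp: Inv_def Sn_inv_app[OF u])
    qed
    show "(\<lambda>(i, j). (inv u j, inv u i)) ` Inv n u \<subseteq> PInv n u"
    proof
      fix x assume "x \<in> (\<lambda>(i, j). (inv u j, inv u i)) ` Inv n u"
      then obtain i j where x: "x = (inv u j, inv u i)" and ij: "1 \<le> i" "i < j" "j \<le> n" "inv u i > inv u j"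
        by (auto simp: Inv_def)
      have "inv u j \<in> {1..n}" "inv u i \<in> {1..n}" using Sn_in[OF Sn_inv[OF u], of i] Sn_in[OF Sn_inv[OF u], of j] ij by auto
      then show "x \<in> PInv n u" using x ij u by (auto simp: PInv_def Sn_app_inv[OF u])
    qed
  qed
  then have "card (PInv n u) = card (Inv n u)" by (rule bij_betw_same_card)
  then show ?thesis by (simp add: len_Inv)
qed

lemma len_tr_increase:
  assumes u: "u \<in> Sn n" and jk: "1 \<le> j" "j < k" "k \<le> n" and ord: "inv u j < inv u k"
  shows "len n u < len n (tr j k \<circ> u)"
proof -
  define P where "P = inv u"
  define a where "a = P j"
  define b where "b = P k"
  have ab: "a < b" using ord by (simp add: a_def b_def P_def)
  have Pinj: "P x = P y \<Longrightarrow> x = y" for x y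
    unfolding P_def using Sn_inj[OF Sn_inv[OF u]] by blast
  have Pv: "Inv n (tr j k \<circ> u) = {(x, y). 1 \<le> x \<and> x < y \<and> y \<le> n \<and> P (tr j k x) > P (tr j k y)}"
    by (simp add: Inv_def inv_tr_comp[OF u] P_def)
  have Pu: "Inv n u = {(x, y). 1 \<le> x \<and> x < y \<and> y \<le> n \<and> P x > P y}"
    by (simp add: Inv_def P_def)
  define spec where "spec x y \<longleftrightarrow> (x \<in> {j, k} \<and> y \<notin> {j, k} \<and> a < P y \<and> P y < b) \<or>
      (y \<in> {j, k} \<and> x \<notin> {j, k} \<and> a < P x \<and> P x < b)" for x y
  define psi where "psi = (\<lambda>(x, y). if spec x y then (min (tr j k x) (tr j k y), max (tr j k x) (tr j k y)) else (x, y))"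
  have jkn: "j \<in> {1..n}" "k \<in> {1..n}" using jk by auto
  have img: "psi (x, y) \<in> Inv n (tr j k \<circ> u) - {(j, k)}" if xy: "(x, y) \<in> Inv n u" for x y
  proof -
    from xy have x: "1 \<le> x" "x < y" "y \<le> n" "P x > P y" by (auto simp: Pu)
    have d: "x \<noteq> j \<Longrightarrow> P x \<noteq> P j" "x \<noteq> k \<Longrightarrow> P x \<noteq> P k"
      "y \<noteq> j \<Longrightarrow> P y \<noteq> P j" "y \<noteq> k \<Longrightarrow> P y \<noteq> P k" using Pinj by blast+
    show ?thesis
    proof (cases "spec x y")
      case False
      then show ?thesis using x jk ab d
        unfolding Pv psi_def spec_def a_def b_def
        by (cases "x = j"; cases "x = k"; cases "y = j"; cases "y = k") (auto dest: Pinj)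
    next
      case True
      then show ?thesis using x jk ab
        unfolding Pv psi_def spec_def a_def b_def
        by (cases "x = j"; cases "x = k"; cases "y = j"; cases "y = k") (auto dest: Pinj simp: min_def max_def)
    qed
  qed
  have inv2: "psi (psi (x, y)) = (x, y)" if "x < y" for x y
    using that jk unfolding psi_def spec_def
    by (cases "x = j"; cases "x = k"; cases "y = j"; cases "y = k") (auto simp: min_def max_def)
  have inj: "inj_on psi (Inv n u)"
  proof (rule inj_on_inverseI[where g = psi])
    fix p assume "p \<in> Inv n u"
    then show "psi (psi p) = p" using inv2 by (auto simp: Pu)
  qed
  have sub: "psi ` Inv n u \<subseteq> Inv n (tr j k \<circ> u) - {(j, k)}"
  proof
    fix q assume "q \<in> psi ` Inv n u"
    then obtain x y where "(x, y) \<in> Inv n u" "q = psi (x, y)" by auto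
    then show "q \<in> Inv n (tr j k \<circ> u) - {(j, k)}" using img by simp
  qed
  have "card (Inv n u) \<le> card (Inv n (tr j k \<circ> u) - {(j, k)})"
    by (rule card_inj_on_le[OF inj sub]) (simp add: finite_Inv)
  moreover have "(j, k) \<in> Inv n (tr j k \<circ> u)"
    using jk ab by (simp add: Pv a_def b_def)
  ultimately show ?thesis
    by (simp add: len_Inv finite_Inv card_Diff_singleton)
      (metis One_nat_def Suc_pred card_gt_0_iff empty_iff finite_Inv le_imp_less_Suc)
qed


lemma bruhat_le_Sn: "bruhat_le n u w \<Longrightarrow> u \<in> Sn n" "bruhat_le n u w \<Longrightarrow> w \<in> Sn n"
  by (auto simp: bruhat_le_def)

lemma bruhat_le_refl: "w \<in> Sn n \<Longrightarrow> bruhat_le n w w"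
  by (simp add: bruhat_le_def)

lemma bruhat_step_le: "bruhat_step n a b \<Longrightarrow> bruhat_le n b w \<Longrightarrow> bruhat_le n a w"
proof -
  assume s: "bruhat_step n a b" and l: "bruhat_le n b w"
  have "a \<in> Sn n" using s by (simp add: bruhat_step_def)
  moreover have "(bruhat_step n)\<^sup>*\<^sup>* a w"
    using converse_rtranclp_into_rtranclp[of "bruhat_step n" a b w, OF s] l by (simp add: bruhat_le_def)
  ultimately show ?thesis using l by (simp add: bruhat_le_def)
qed

lemma tr_tr: "tr j k \<circ> (tr j k \<circ> u) = u"
  by (simp add: comp_assoc[symmetric])

lemma Inv_step:
  assumes u: "u \<in> Sn n" and jk: "(j, k) \<in> Inv n u"
  shows "bruhat_step n (tr j k \<circ> u) u"
proof -
  have j: "1 \<le> j" "j < k" "k \<le> n" "inv u j > inv u k" using jk by (auto simp: Inv_def)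
  define v where "v = tr j k \<circ> u"
  have v: "v \<in> Sn n" unfolding v_def using j by (intro Sn_comp Sn_tr u) auto
  have "inv v j = inv u k" "inv v k = inv u j"
    by (simp_all add: v_def inv_tr_comp[OF u])
  then have "inv v j < inv v k" using j by simp
  then have "len n v < len n (tr j k \<circ> v)" by (rule len_tr_increase[OF v j(1-3)])
  then have "len n v < len n u" by (simp add: v_def tr_tr)
  moreover have "u = tr j k \<circ> v" by (simp add: v_def tr_tr)
  ultimately show ?thesis unfolding bruhat_step_def v_def[symmetric]
    using v j by blast
qed

lemma Inv_le: "bruhat_le n u w \<Longrightarrow> (j, k) \<in> Inv n u \<Longrightarrow> bruhat_le n (tr j k \<circ> u) w"
  by (rule bruhat_step_le[OF Inv_step]) (auto dest: bruhat_le_Sn)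

subsection \<open>Lexicographic order\<close>

definition lexless :: "(nat \<Rightarrow> nat) \<Rightarrow> (nat \<Rightarrow> nat) \<Rightarrow> bool" where
  "lexless u v \<longleftrightarrow> (\<exists>i. (\<forall>j<i. u j = v j) \<and> u i < v i)"

lemma lex_irrefl: "\<not> lexless u u"
  by (simp add: lexless_def)

lemma lex_trans: "lexless u v \<Longrightarrow> lexless v w \<Longrightarrow> lexless u w"
  unfolding lexless_def
proof (elim exE conjE)
  fix i i' assume a: "\<forall>j<i. u j = v j" "u i < v i" "\<forall>j<i'. v j = w j" "v i' < w i'"
  show "\<exists>i. (\<forall>j<i. u j = w j) \<and> u i < w i"
  proof (cases "i < i'")
    case True then show ?thesis using a by (intro exI[of _ i]) auto
  next
    case False
    show ?thesis
    proof (cases "i = i'")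
      case True then show ?thesis using a by (intro exI[of _ i]) auto
    next
      case False
      then have "i' < i" using \<open>\<not> i < i'\<close> by simp
      then show ?thesis using a by (intro exI[of _ i']) auto
    qed
  qed
qed

lemma lex_total: "u \<noteq> v \<Longrightarrow> lexless u v \<or> lexless v u"
proof -
  assume "u \<noteq> v"
  then have ex: "\<exists>i. u i \<noteq> v i" by (auto simp: fun_eq_iff)
  define i where "i = (LEAST i. u i \<noteq> v i)"
  have ne: "u i \<noteq> v i" unfolding i_def by (rule LeastI_ex[OF ex])
  have eq: "\<forall>j<i. u j = v j" unfolding i_def using not_less_Least by blast
  show ?thesis
  proof (cases "u i < v i")
    case True then have "lexless u v" using eq unfolding lexless_def by (intro exI[of _ i]) auto
    then show ?thesis by blast
  next
    case False then have "v i < u i" using ne by simp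
    then have "lexless v u" using eq unfolding lexless_def by (intro exI[of _ i]) auto
    then show ?thesis by blast
  qed
qed

lemma lex_asym: "lexless u v \<Longrightarrow> \<not> lexless v u"
  using lex_trans lex_irrefl by blast

lemma lex_min:
  assumes "finite S" "S \<noteq> {}"
  shows "\<exists>x\<in>S. \<forall>y\<in>S. y \<noteq> x \<longrightarrow> lexless x y"
  using assms
proof (induction S rule: finite_ne_induct)
  case (singleton x) then show ?case by simp
next
  case (insert a F)
  then obtain m where m: "m \<in> F" "\<forall>y\<in>F. y \<noteq> m \<longrightarrow> lexless m y" by blast
  have "a \<noteq> m" using m insert by auto
  then show ?case
  proof (cases "lexless a m")
    case True
    then show ?thesis using m lex_trans by (intro bexI[of _ a]) auto
  next
    case False
    then have "lexless m a" using lex_total \<open>a \<noteq> m\<close> by blast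
    then show ?thesis using m by (intro bexI[of _ m]) auto
  qed
qed

lemma lex_Inv:
  assumes u: "u \<in> Sn n" and jk: "(j, k) \<in> Inv n u"
  shows "lexless (tr j k \<circ> u) u"
proof -
  have j: "1 \<le> j" "j < k" "k \<le> n" "inv u j > inv u k" using jk by (auto simp: Inv_def)
  define i where "i = inv u k"
  have ui: "u i = k" by (simp add: i_def Sn_app_inv[OF u])
  have "\<forall>i'<i. (tr j k \<circ> u) i' = u i'"
  proof (intro allI impI)
    fix i' assume "i' < i"
    then have "u i' \<noteq> j" "u i' \<noteq> k" using j by (auto simp: i_def Sn_inv_app[OF u])
    then show "(tr j k \<circ> u) i' = u i'" by simp
  qed
  moreover have "(tr j k \<circ> u) i < u i" using ui j by simp
  ultimately show ?thesis by (auto simp: lexless_def)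
qed

lemma lex_PInv:
  assumes u: "u \<in> Sn n" and v: "v \<in> Sn n" and l: "lexless u v"
  shows "\<exists>a b. (a, b) \<in> PInv n v \<and> u a = v b"
proof -
  obtain i where i: "\<forall>j<i. u j = v j" "u i < v i" using l by (auto simp: lexless_def)
  have iin: "i \<in> {1..n}"
  proof (rule ccontr)
    assume "i \<notin> {1..n}"
    then have "u i = i" "v i = i" using Sn_out u v by auto
    then show False using i by simp
  qed
  then have "u i \<in> {1..n}" using Sn_in[OF u, of i] by simp
  define b where "b = inv v (u i)"
  have vb: "v b = u i" by (simp add: b_def Sn_app_inv[OF v])
  have bin: "b \<in> {1..n}" using Sn_in[OF v, of b] vb \<open>u i \<in> {1..n}\<close> by simp
  have "b \<noteq> i" using vb i by auto
  moreover have "\<not> b < i"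
  proof
    assume "b < i"
    then have "u b = v b" using i by simp
    then have "u b = u i" using vb by simp
    then have "b = i" using Sn_inj[OF u] by blast
    then show False using \<open>b < i\<close> by simp
  qed
  ultimately have "i < b" by simp
  then have "(i, b) \<in> PInv n v" using iin bin vb i by (auto simp: PInv_def)
  then show ?thesis using vb by (intro exI[of _ i] exI[of _ b]) simp
qed

lemma longest_invol: "longest n (longest n i) = i"
  unfolding longest_def by (auto split: if_splits)

lemma longest_Sn: "longest n \<in> Sn n"
proof -
  have "bij_betw (longest n) {1..n} {1..n}"
    by (rule bij_betw_byWitness[where f' = "longest n"]) (auto simp: longest_def)
  moreover have "\<forall>x. x \<notin> {1..n} \<longrightarrow> longest n x = x" by (simp add: longest_def)
  ultimately show ?thesis unfolding Sn_def by (auto intro: bij_imp_permutes)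
qed

lemma full_Inv_longest:
  assumes u: "u \<in> Sn n" and full: "Inv n u = pairs n"
  shows "u = longest n"
proof -
  define P where "P = inv u"
  have P: "P \<in> Sn n" unfolding P_def by (rule Sn_inv[OF u])
  have dec: "i < j \<Longrightarrow> i \<in> {1..n} \<Longrightarrow> j \<in> {1..n} \<Longrightarrow> P i > P j" for i j
    using full unfolding Inv_def pairs_def P_def by (auto simp: set_eq_iff)
  have Pinj: "inj_on P A" for A using Sn_inj[OF P] by (auto simp: inj_on_def)
  have Pi: "P i = n + 1 - i" if i: "i \<in> {1..n}" for i
  proof -
    have Pin: "P i \<in> {1..n}" using Sn_in[OF P, of i] i by simp
    have "card {i<..n} \<le> card {1..<P i}"
    proof (rule card_inj_on_le[OF Pinj])
      show "P ` {i<..n} \<subseteq> {1..<P i}"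
      proof
        fix y assume "y \<in> P ` {i<..n}"
        then obtain j where j: "j \<in> {i<..n}" "y = P j" by auto
        have "j \<in> {1..n}" using j i by auto
        then have "P j \<in> {1..n}" using Sn_in[OF P, of j] by simp
        then show "y \<in> {1..<P i}" using dec[of i j] j i by auto
      qed
    qed simp
    moreover have "card {1..<i} \<le> card {P i<..n}"
    proof (rule card_inj_on_le[OF Pinj])
      show "P ` {1..<i} \<subseteq> {P i<..n}"
      proof
        fix y assume "y \<in> P ` {1..<i}"
        then obtain j where j: "j \<in> {1..<i}" "y = P j" by auto
        have "j \<in> {1..n}" using j i by auto
        then have "P j \<in> {1..n}" using Sn_in[OF P, of j] by simp
        then show "y \<in> {P i<..n}" using dec[of j i] j i by auto
      qed
    qed simp
    ultimately show ?thesis using i Pin by simp arith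
  qed
  have "P = longest n"
  proof
    fix i show "P i = longest n i"
      by (cases "i \<in> {1..n}") (auto simp: Pi longest_def Sn_out[OF P])
  qed
  then have "inv (inv u) = inv (longest n)" by (simp add: P_def)
  moreover have "inv (longest n) = longest n"
    by (rule inv_unique_comp) (auto simp: fun_eq_iff longest_invol)
  ultimately show ?thesis using Sn_bij[OF u] by (simp add: inv_inv_eq)
qed

lemma Sn_le_longest: "u \<in> Sn n \<Longrightarrow> bruhat_le n u (longest n)"
proof (induction "card (pairs n) - len n u" arbitrary: u rule: less_induct)
  case less
  show ?case
  proof (cases "Inv n u = pairs n")
    case True
    then show ?thesis using full_Inv_longest[OF less.prems] less.prems bruhat_le_refl by simp
  next
    case False
    obtain p where p: "p \<in> pairs n" "p \<notin> Inv n u" using False Inv_sub[of n u] by blast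
    obtain j k where "p = (j, k)" by (cases p)
    then have jk: "(j, k) \<in> pairs n" "(j, k) \<notin> Inv n u" using p by auto
    have j: "1 \<le> j" "j < k" "k \<le> n" using jk by (auto simp: pairs_def)
    have "inv u j \<noteq> inv u k" using j Sn_inj[OF Sn_inv[OF less.prems]] by auto
    then have ord: "inv u j < inv u k" using jk j by (auto simp: Inv_def)
    define v where "v = tr j k \<circ> u"
    have v: "v \<in> Sn n" unfolding v_def using j by (intro Sn_comp Sn_tr less.prems) auto
    have lt: "len n u < len n v" unfolding v_def by (rule len_tr_increase[OF less.prems j ord])
    have "bruhat_le n v (longest n)"
      by (rule less.hyps) (use lt len_le[of n v] v in auto)
    moreover have "bruhat_step n u v"
      unfolding bruhat_step_def using less.prems j lt v_def by blast
    ultimately show ?thesis by (rule bruhat_step_le[rotated])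
  qed
qed

lemma finite_bruhat: "finite {v. bruhat_le n v w}"
  by (rule finite_subset[OF _ finite_Sn]) (auto dest: bruhat_le_Sn)



lemma fsum_apply: "(\<Sum>i\<in>I. f i) x = (\<Sum>i\<in>I. f i x)"
  by (induction I rule: infinite_finite_induct) auto

lemma fprod_apply: "(\<Prod>i\<in>I. f i) x = (\<Prod>i\<in>I. f i x)"
  by (induction I rule: infinite_finite_induct) auto

definition cong :: "nat \<Rightarrow> nat \<Rightarrow> nat \<Rightarrow> mpoly \<Rightarrow> mpoly \<Rightarrow> bool" where
  "cong n j k a b \<longleftrightarrow> (\<exists>q\<in>polys n. a - b = (var j - var k) * q)"

lemma cong_refl: "cong n j k a a"
  unfolding cong_def by (rule bexI[of _ 0]) auto

lemma cong_add: "cong n j k a b \<Longrightarrow> cong n j k c d \<Longrightarrow> cong n j k (a + c) (b + d)"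
  unfolding cong_def
proof (elim bexE)
  fix q1 q2 assume "q1 \<in> polys n" "a - b = (var j - var k) * q1" "q2 \<in> polys n" "c - d = (var j - var k) * q2"
  then show "\<exists>q\<in>polys n. a + c - (b + d) = (var j - var k) * q"
    by (intro bexI[of _ "q1 + q2"]) (simp_all add: algebra_simps)
qed

lemma cong_uminus: "cong n j k a b \<Longrightarrow> cong n j k (- a) (- b)"
  unfolding cong_def
proof (elim bexE)
  fix q1 assume "q1 \<in> polys n" "a - b = (var j - var k) * q1"
  then show "\<exists>q\<in>polys n. - a - - b = (var j - var k) * q"
    by (intro bexI[of _ "- q1"]) (simp_all add: algebra_simps)
qed

lemma cong_diff: "cong n j k a b \<Longrightarrow> cong n j k c d \<Longrightarrow> cong n j k (a - c) (b - d)"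
  using cong_add[of n j k a b "-c" "-d"] cong_uminus[of n j k c d] by simp

lemma cong_mult: "cong n j k a b \<Longrightarrow> cong n j k c d \<Longrightarrow> b \<in> polys n \<Longrightarrow> c \<in> polys n \<Longrightarrow>
    cong n j k (a * c) (b * d)"
  unfolding cong_def
proof (elim bexE)
  fix q1 q2 assume q1: "q1 \<in> polys n" and e1: "a - b = (var j - var k) * q1"
    and q2: "q2 \<in> polys n" and e2: "c - d = (var j - var k) * q2"
    and bc: "b \<in> polys n" "c \<in> polys n"
  have "a * c - b * d = (a - b) * c + b * (c - d)" by (simp add: algebra_simps)
  also have "\<dots> = ((var j - var k) * q1) * c + b * ((var j - var k) * q2)"
    by (simp only: e1 e2)
  also have "\<dots> = (var j - var k) * (q1 * c + b * q2)" by (simp add: algebra_simps)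
  finally have "a * c - b * d = (var j - var k) * (q1 * c + b * q2)" .
  then show "\<exists>q\<in>polys n. a * c - b * d = (var j - var k) * q"
    using q1 q2 bc by (intro bexI[of _ "q1 * c + b * q2"]) simp_all
qed

definition good :: "nat \<Rightarrow> (nat \<Rightarrow> nat) \<Rightarrow> ((nat \<Rightarrow> nat) \<Rightarrow> mpoly) \<Rightarrow> bool" where
  "good n w f \<longleftrightarrow> (\<forall>u. bruhat_le n u w \<longrightarrow> f u \<in> polys n) \<and>
     (\<forall>j k u. 1 \<le> j \<and> j < k \<and> k \<le> n \<and> bruhat_le n u w \<and> bruhat_le n (tr j k \<circ> u) w \<longrightarrow>
        cong n j k (f u) (f (tr j k \<circ> u)))"

lemma goodI:
  assumes "\<And>u. bruhat_le n u w \<Longrightarrow> f u \<in> polys n"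
    and "\<And>j k u. 1 \<le> j \<Longrightarrow> j < k \<Longrightarrow> k \<le> n \<Longrightarrow> bruhat_le n u w \<Longrightarrow> bruhat_le n (tr j k \<circ> u) w \<Longrightarrow>
        cong n j k (f u) (f (tr j k \<circ> u))"
  shows "good n w f"
  using assms unfolding good_def by blast

lemma goodD1: "good n w f \<Longrightarrow> bruhat_le n u w \<Longrightarrow> f u \<in> polys n"
  unfolding good_def by blast

lemma goodD2: "good n w f \<Longrightarrow> 1 \<le> j \<Longrightarrow> j < k \<Longrightarrow> k \<le> n \<Longrightarrow> bruhat_le n u w \<Longrightarrow> bruhat_le n (tr j k \<circ> u) w \<Longrightarrow>
        cong n j k (f u) (f (tr j k \<circ> u))"
  unfolding good_def by blast

lemma good_add: assumes f: "good n w f" and g: "good n w g" shows "good n w (f + g)"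
proof (rule goodI)
  fix u assume "bruhat_le n u w" then show "(f + g) u \<in> polys n"
    using goodD1[OF f] goodD1[OF g] by simp
next
  fix j k u assume h: "1 \<le> j" "j < k" "k \<le> n" "bruhat_le n u w" "bruhat_le n (tr j k \<circ> u) w"
  show "cong n j k ((f + g) u) ((f + g) (tr j k \<circ> u))"
    using cong_add[OF goodD2[OF f h] goodD2[OF g h]] by simp
qed

lemma good_uminus: assumes f: "good n w f" shows "good n w (- f)"
proof (rule goodI)
  fix u assume "bruhat_le n u w" then show "(- f) u \<in> polys n"
    using goodD1[OF f] by simp
next
  fix j k u assume h: "1 \<le> j" "j < k" "k \<le> n" "bruhat_le n u w" "bruhat_le n (tr j k \<circ> u) w"
  show "cong n j k ((- f) u) ((- f) (tr j k \<circ> u))"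
    using cong_uminus[OF goodD2[OF f h]] by simp
qed

lemma good_diff: assumes f: "good n w f" and g: "good n w g" shows "good n w (f - g)"
proof (rule goodI)
  fix u assume "bruhat_le n u w" then show "(f - g) u \<in> polys n"
    using goodD1[OF f] goodD1[OF g] by simp
next
  fix j k u assume h: "1 \<le> j" "j < k" "k \<le> n" "bruhat_le n u w" "bruhat_le n (tr j k \<circ> u) w"
  show "cong n j k ((f - g) u) ((f - g) (tr j k \<circ> u))"
    using cong_diff[OF goodD2[OF f h] goodD2[OF g h]] by simp
qed

lemma good_mult: assumes f: "good n w f" and g: "good n w g" shows "good n w (f * g)"
proof (rule goodI)
  fix u assume "bruhat_le n u w" then show "(f * g) u \<in> polys n"
    using goodD1[OF f] goodD1[OF g] by simp
next
  fix j k u assume h: "1 \<le> j" "j < k" "k \<le> n" "bruhat_le n u w" "bruhat_le n (tr j k \<circ> u) w"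
  have "f (tr j k \<circ> u) \<in> polys n" "g u \<in> polys n" using goodD1[OF f h(5)] goodD1[OF g h(4)] .
  then show "cong n j k ((f * g) u) ((f * g) (tr j k \<circ> u))"
    using cong_mult[OF goodD2[OF f h] goodD2[OF g h]] by simp
qed

lemma good_const: "c \<in> polys n \<Longrightarrow> good n w (\<lambda>_. c)"
  by (rule goodI) (auto intro: cong_refl)

lemma good_0: "good n w 0"
  using good_const[of 0 n w] by (simp add: zero_fun_def)

lemma good_1: "good n w 1"
  using good_const[of 1 n w] by (simp add: one_fun_def)

lemma good_sum: "(\<And>i. i \<in> I \<Longrightarrow> good n w (f i)) \<Longrightarrow> good n w (\<Sum>i\<in>I. f i)"
  by (induction I rule: infinite_finite_induct) (auto intro: good_add good_0)

lemma good_prod: "(\<And>i. i \<in> I \<Longrightarrow> good n w (f i)) \<Longrightarrow> good n w (\<Prod>i\<in>I. f i)"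
  by (induction I rule: infinite_finite_induct) (auto intro: good_mult good_1)

lemma good_X:
  assumes i: "i \<in> {1..n}" shows "good n w (\<lambda>u. var (u i))"
proof (rule goodI)
  fix u assume "bruhat_le n u w"
  then have "u \<in> Sn n" by (rule bruhat_le_Sn)
  then show "var (u i) \<in> polys n" using Sn_in[of u n i] i by (simp add: polys_var)
next
  fix j k u assume "1 \<le> j" "j < k" "k \<le> n"
  show "cong n j k (var (u i)) (var ((tr j k \<circ> u) i))"
    unfolding cong_def
  proof (cases "u i = j")
    case True then show "\<exists>q\<in>polys n. var (u i) - var ((tr j k \<circ> u) i) = (var j - var k) * q"
      by (intro bexI[of _ 1]) simp_all
  next
    case False
    show "\<exists>q\<in>polys n. var (u i) - var ((tr j k \<circ> u) i) = (var j - var k) * q"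
    proof (cases "u i = k")
      case True then show ?thesis by (intro bexI[of _ "-1"]) simp_all
    next
      case False then show ?thesis using \<open>u i \<noteq> j\<close> by (intro bexI[of _ 0]) simp_all
    qed
  qed
qed

lemma GKM_iff: "p \<in> GKM n w \<longleftrightarrow> good n w p \<and> (\<forall>u. \<not> bruhat_le n u w \<longrightarrow> p u = 0)"
proof
  assume "p \<in> GKM n w"
  then show "good n w p \<and> (\<forall>u. \<not> bruhat_le n u w \<longrightarrow> p u = 0)"
    unfolding GKM_def good_def cong_def by blast
next
  assume a: "good n w p \<and> (\<forall>u. \<not> bruhat_le n u w \<longrightarrow> p u = 0)"
  have "p u \<in> polys n" for u
    using a goodD1[of n w p u] by (cases "bruhat_le n u w") auto
  then show "p \<in> GKM n w" using a unfolding GKM_def good_def cong_def by blast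
qed

lemma restr_GKM: "good n w f \<Longrightarrow> restr n w f \<in> GKM n w"
  unfolding GKM_iff
proof
  assume g: "good n w f"
  show "good n w (restr n w f)"
  proof (rule goodI)
    show "restr n w f u \<in> polys n" if "bruhat_le n u w" for u
      using that goodD1[OF g] by (simp add: restr_def)
    show "cong n j k (restr n w f u) (restr n w f (tr j k \<circ> u))"
      if "1 \<le> j" "j < k" "k \<le> n" "bruhat_le n u w" "bruhat_le n (tr j k \<circ> u) w" for j k u
      using that goodD2[OF g] by (simp add: restr_def)
  qed
  show "\<forall>u. \<not> bruhat_le n u w \<longrightarrow> restr n w f u = 0" by (simp add: restr_def)
qed

lemma GKM_good: "p \<in> GKM n w \<Longrightarrow> good n w p" by (simp add: GKM_iff)
lemma GKM_out: "p \<in> GKM n w \<Longrightarrow> \<not> bruhat_le n u w \<Longrightarrow> p u = 0" by (simp add: GKM_iff)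
lemma GKM_polys: "p \<in> GKM n w \<Longrightarrow> p u \<in> polys n" by (simp add: GKM_def)

lemma GKM_restr: "p \<in> GKM n w \<Longrightarrow> restr n w p = p"
  by (auto simp: restr_def fun_eq_iff GKM_out)

lemma GKM_add: "p \<in> GKM n w \<Longrightarrow> q \<in> GKM n w \<Longrightarrow> p + q \<in> GKM n w"
  by (simp add: GKM_iff good_add)

lemma GKM_diff: "p \<in> GKM n w \<Longrightarrow> q \<in> GKM n w \<Longrightarrow> p - q \<in> GKM n w"
  by (simp add: GKM_iff good_diff)

lemma GKM_0: "0 \<in> GKM n w"
  by (simp add: GKM_iff good_0)

lemma GKM_mult: "p \<in> GKM n w \<Longrightarrow> good n w f \<Longrightarrow> f * p \<in> GKM n w"
  by (simp add: GKM_iff good_mult)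

lemma GKM_cmul: "p \<in> GKM n w \<Longrightarrow> c \<in> polys n \<Longrightarrow> (\<lambda>_. c) * p \<in> GKM n w"
  by (rule GKM_mult) (auto intro: good_const)

lemma GKM_sum: "(\<And>i. i \<in> I \<Longrightarrow> f i \<in> GKM n w) \<Longrightarrow> (\<Sum>i\<in>I. f i) \<in> GKM n w"
  by (induction I rule: infinite_finite_induct) (auto intro: GKM_add GKM_0)

subsection \<open>The basis classes\<close>

definition E :: "nat \<Rightarrow> (nat \<Rightarrow> nat) \<Rightarrow> (nat \<Rightarrow> nat) \<Rightarrow> mpoly" where
  "E n v = (\<Prod>(a, b)\<in>PInv n v. (\<lambda>u. var (u a)) - (\<lambda>u. var (v b)))"

lemma E_apply: "E n v u = (\<Prod>(a, b)\<in>PInv n v. var (u a) - var (v b))"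
  unfolding E_def fprod_apply by (simp add: split_beta)

lemma good_E: assumes v: "v \<in> Sn n" shows "good n w (E n v)"
  unfolding E_def
proof (rule good_prod)
  fix p assume p: "p \<in> PInv n v"
  obtain a b where ab: "p = (a, b)" by (cases p)
  have a: "a \<in> {1..n}" "b \<in> {1..n}" using p ab by (auto simp: PInv_def)
  then have "v b \<in> {1..n}" using Sn_in[OF v, of b] by simp
  then show "good n w ((\<lambda>(a, b). (\<lambda>u. var (u a)) - (\<lambda>u. var (v b))) p)"
    unfolding ab using a by (auto intro!: good_diff good_X good_const polys_var)
qed

definition Xi :: "nat \<Rightarrow> (nat \<Rightarrow> nat) \<Rightarrow> (nat \<Rightarrow> nat) \<Rightarrow> (nat \<Rightarrow> nat) \<Rightarrow> mpoly" where
  "Xi n w v = restr n w (E n v)"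

lemma Xi_GKM: "v \<in> Sn n \<Longrightarrow> Xi n w v \<in> GKM n w"
  unfolding Xi_def by (rule restr_GKM[OF good_E])

lemma Xi_apply: "bruhat_le n u w \<Longrightarrow> Xi n w v u = (\<Prod>(a, b)\<in>PInv n v. var (u a) - var (v b))"
  by (simp add: Xi_def restr_def E_apply)

lemma Xi_lex0:
  assumes u: "bruhat_le n u w" and v: "v \<in> Sn n" and l: "lexless u v"
  shows "Xi n w v u = 0"
proof -
  obtain a b where ab: "(a, b) \<in> PInv n v" "u a = v b"
    using lex_PInv[OF bruhat_le_Sn(1)[OF u] v l] by blast
  show ?thesis unfolding Xi_apply[OF u]
    using ab by (intro prod_zero[OF finite_PInv] bexI[of _ "(a, b)"]) simp_all
qed

lemma Xi_diag:
  assumes v: "bruhat_le n v w"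
  shows "Xi n w v v = (\<Prod>(a, b)\<in>PInv n v. var (v a) - var (v b))" "Xi n w v v \<noteq> 0"
proof -
  show "Xi n w v v = (\<Prod>(a, b)\<in>PInv n v. var (v a) - var (v b))" by (rule Xi_apply[OF v])
  have vS: "v \<in> Sn n" using bruhat_le_Sn(1)[OF v] .
  have "(\<Prod>(a, b)\<in>PInv n v. var (v a) - var (v b)) \<noteq> 0"
  proof
    assume "(\<Prod>(a, b)\<in>PInv n v. var (v a) - var (v b)) = 0"
    then obtain p where p: "p \<in> PInv n v" "(\<lambda>(a, b). var (v a) - var (v b)) p = 0"
      using finite_PInv prod_zero_iff by blast
    obtain a b where ab: "p = (a, b)" by (cases p)
    have "v a \<noteq> v b" using p ab by (auto simp: PInv_def)
    then show False using p ab var_diff_nz by auto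
  qed
  then show "Xi n w v v \<noteq> 0" using Xi_apply[OF v] by simp
qed

lemma Xi_homog: assumes v: "v \<in> Sn n" shows "homog (len n v) (Xi n w v u)"
proof (cases "bruhat_le n u w")
  case True
  have "homog (card (PInv n v)) (\<Prod>i\<in>PInv n v. var ((\<lambda>(a, b). u a) i) - var ((\<lambda>(a, b). v b) i))"
    by (rule homog_prod_alpha[OF finite_PInv])
  then show ?thesis using True by (simp add: Xi_apply card_PInv[OF v] split_beta)
next
  case False then show ?thesis by (simp add: Xi_def restr_def)
qed

lemma Xi_dvd:
  assumes p: "p \<in> GKM n w" and u: "bruhat_le n u w"
    and z: "\<And>x. bruhat_le n x w \<Longrightarrow> lexless x u \<Longrightarrow> p x = 0"
  shows "Xi n w u u dvd p u"
proof -
  have uS: "u \<in> Sn n" using bruhat_le_Sn(1)[OF u] .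
  have "(\<Prod>i\<in>PInv n u. var ((\<lambda>(a, b). u a) i) - var ((\<lambda>(a, b). u b) i)) dvd p u"
  proof (rule prod_alpha_dvd[OF finite_PInv])
    fix i assume i: "i \<in> PInv n u"
    obtain a b where ab: "i = (a, b)" by (cases i)
    have abn: "1 \<le> a" "a < b" "b \<le> n" "u a > u b" using i ab by (auto simp: PInv_def)
    show "(\<lambda>(a, b). u a) i \<noteq> (\<lambda>(a, b). u b) i" using abn ab by simp
    define j where "j = u b"
    define k where "k = u a"
    have jn: "j \<in> {1..n}" "k \<in> {1..n}" using Sn_in[OF uS, of b] Sn_in[OF uS, of a] abn
      by (auto simp: j_def k_def)
    have jk: "(j, k) \<in> Inv n u"
      using jn abn by (auto simp: Inv_def j_def k_def Sn_inv_app[OF uS])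
    have le: "bruhat_le n (tr j k \<circ> u) w" by (rule Inv_le[OF u jk])
    have "p (tr j k \<circ> u) = 0" by (rule z[OF le lex_Inv[OF uS jk]])
    moreover have "cong n j k (p u) (p (tr j k \<circ> u))"
      by (rule goodD2[OF GKM_good[OF p]]) (use jn abn le u in \<open>auto simp: j_def k_def\<close>)
    ultimately obtain q where "p u = (var j - var k) * q" by (auto simp: cong_def)
    then have "p u = (var k - var j) * (- q)" by (simp add: algebra_simps)
    then show "(var ((\<lambda>(a, b). u a) i) - var ((\<lambda>(a, b). u b) i)) dvd p u"
      by (simp add: ab j_def k_def)
  next
    fix i i' assume i: "i \<in> PInv n u" and i': "i' \<in> PInv n u" and ne: "i \<noteq> i'"
    obtain a b where ab: "i = (a, b)" by (cases i)
    obtain a' b' where ab': "i' = (a', b')" by (cases i')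
    have "a < b" "a' < b'" using i i' ab ab' by (auto simp: PInv_def)
    show "{(\<lambda>(a, b). u a) i, (\<lambda>(a, b). u b) i} \<noteq> {(\<lambda>(a, b). u a) i', (\<lambda>(a, b). u b) i'}"
    proof
      assume "{(\<lambda>(a, b). u a) i, (\<lambda>(a, b). u b) i} = {(\<lambda>(a, b). u a) i', (\<lambda>(a, b). u b) i'}"
      then have "{u a, u b} = {u a', u b'}" by (simp add: ab ab')
      then have "(u a = u a' \<and> u b = u b') \<or> (u a = u b' \<and> u b = u a')" by (auto simp: doubleton_eq_iff)
      then have "(a = a' \<and> b = b') \<or> (a = b' \<and> b = a')" using Sn_inj[OF uS] by blast
      then show False using ne ab ab' \<open>a < b\<close> \<open>a' < b'\<close> by auto
    qed
  qed
  then show ?thesis using Xi_apply[OF u, of u] by (simp add: split_beta)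
qed


subsection \<open>Expansion in the basis\<close>

definition Bw :: "nat \<Rightarrow> (nat \<Rightarrow> nat) \<Rightarrow> (nat \<Rightarrow> nat) set" where
  "Bw n w = {v. bruhat_le n v w}"

lemma finite_Bw: "finite (Bw n w)" by (simp add: Bw_def finite_bruhat)

definition expands :: "nat \<Rightarrow> (nat \<Rightarrow> nat) \<Rightarrow> ((nat \<Rightarrow> nat) \<Rightarrow> mpoly) \<Rightarrow> ((nat \<Rightarrow> nat) \<Rightarrow> mpoly) \<Rightarrow> bool" where
  "expands n w p g \<longleftrightarrow> (\<forall>v. \<not> bruhat_le n v w \<longrightarrow> g v = 0) \<and> p = (\<Sum>v\<in>Bw n w. (\<lambda>_. g v) * Xi n w v)"

lemma zero_unique:
  assumes h0: "\<forall>v. \<not> bruhat_le n v w \<longrightarrow> h v = 0"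
    and s: "(\<Sum>v\<in>Bw n w. (\<lambda>_. h v) * Xi n w v) = 0"
  shows "h = (\<lambda>_. 0)"
proof (rule ccontr)
  assume "h \<noteq> (\<lambda>_. 0)"
  then obtain v1 where v1: "h v1 \<noteq> 0" by auto
  define S where "S = {v\<in>Bw n w. h v \<noteq> 0}"
  have "v1 \<in> S" using v1 h0 by (auto simp: S_def Bw_def)
  moreover have "finite S" unfolding S_def using finite_Bw by simp
  ultimately obtain v0 where v0: "v0 \<in> S" "\<forall>y\<in>S. y \<noteq> v0 \<longrightarrow> lexless v0 y"
    using lex_min[of S] by blast
  have v0w: "bruhat_le n v0 w" using v0 by (simp add: S_def Bw_def)
  have v0B: "v0 \<in> Bw n w" using v0w by (simp add: Bw_def)
  have "0 = (\<Sum>v\<in>Bw n w. (\<lambda>_. h v) * Xi n w v) v0" using s by simp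
  also have "\<dots> = (\<Sum>v\<in>Bw n w. h v * Xi n w v v0)" by (simp add: fsum_apply)
  also have "\<dots> = h v0 * Xi n w v0 v0 + (\<Sum>v\<in>Bw n w - {v0}. h v * Xi n w v v0)"
    by (rule sum.remove[OF finite_Bw v0B])
  also have "(\<Sum>v\<in>Bw n w - {v0}. h v * Xi n w v v0) = 0"
  proof (rule sum.neutral, rule ballI)
    fix v assume v: "v \<in> Bw n w - {v0}"
    show "h v * Xi n w v v0 = 0"
    proof (cases "h v = 0")
      case False
      then have "v \<in> S" using v by (simp add: S_def)
      then have "lexless v0 v" using v0 v by auto
      moreover have "v \<in> Sn n" using v by (auto simp: Bw_def dest: bruhat_le_Sn)
      ultimately have "Xi n w v v0 = 0" using Xi_lex0[OF v0w] by blast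
      then show ?thesis by simp
    qed simp
  qed
  finally have "h v0 * Xi n w v0 v0 = 0" by simp
  then have "h v0 = 0" using Xi_diag(2)[OF v0w] by simp
  then show False using v0 by (simp add: S_def)
qed

lemma expands_unique:
  assumes g: "expands n w p g" and g': "expands n w p g'"
  shows "g = g'"
proof -
  have "(\<Sum>v\<in>Bw n w. (\<lambda>_. g v - g' v) * Xi n w v) =
        (\<Sum>v\<in>Bw n w. (\<lambda>_. g v) * Xi n w v) - (\<Sum>v\<in>Bw n w. (\<lambda>_. g' v) * Xi n w v)"
    by (rule ext) (simp add: fsum_apply sum_subtractf[symmetric] algebra_simps)
  also have "\<dots> = 0" using g g' by (simp add: expands_def)
  finally have "(\<lambda>v. g v - g' v) = (\<lambda>_. 0)"
    by (intro zero_unique) (use g g' in \<open>auto simp: expands_def\<close>)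
  then show ?thesis by (auto simp: fun_eq_iff dest: fun_cong)
qed

lemma expand_exists:
  assumes p0: "p \<in> GKM n w" shows "\<exists>g. (\<forall>v. g v \<in> polys n) \<and> expands n w p g"
proof -
  define M where "M p = card {x\<in>Bw n w. \<exists>y\<in>Bw n w. p y \<noteq> 0 \<and> (y = x \<or> lexless y x)}"
    for p :: "(nat \<Rightarrow> nat) \<Rightarrow> mpoly"
  have main: "\<forall>p. p \<in> GKM n w \<longrightarrow> M p = N \<longrightarrow> (\<exists>g. (\<forall>v. g v \<in> polys n) \<and> expands n w p g)" for N
  proof (induction N rule: less_induct)
    case (less N)
    show ?case
    proof (intro allI impI)
      fix p assume p: "p \<in> GKM n w" and MN: "M p = N"
      show "\<exists>g. (\<forall>v. g v \<in> polys n) \<and> expands n w p g"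
      proof (cases "\<forall>y\<in>Bw n w. p y = 0")
        case True
        then have p0: "p = 0" using GKM_out[OF p] by (auto simp: Bw_def fun_eq_iff)
        have "expands n w p (\<lambda>_. 0)"
          unfolding expands_def p0 by (simp add: zero_fun_def[symmetric])
        then show ?thesis by (intro exI[of _ "\<lambda>_. 0"]) simp
      next
        case False
        define S where "S = {y\<in>Bw n w. p y \<noteq> 0}"
        have "S \<noteq> {}" using False by (auto simp: S_def)
        moreover have "finite S" unfolding S_def using finite_Bw by simp
        ultimately obtain u where u: "u \<in> S" "\<forall>y\<in>S. y \<noteq> u \<longrightarrow> lexless u y"
          using lex_min[of S] by blast
        have uw: "bruhat_le n u w" using u by (simp add: S_def Bw_def)
        have uB: "u \<in> Bw n w" using uw by (simp add: Bw_def)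
        have uS: "u \<in> Sn n" using bruhat_le_Sn(1)[OF uw] .
        have z: "p x = 0" if "bruhat_le n x w" "lexless x u" for x
        proof (rule ccontr)
          assume "p x \<noteq> 0"
          then have "x \<in> S" using that by (simp add: S_def Bw_def)
          moreover have "x \<noteq> u" using that lex_irrefl by blast
          ultimately have "lexless u x" using u by blast
          then show False using that lex_asym by blast
        qed
        obtain r where r: "p u = Xi n w u u * r" using Xi_dvd[OF p uw z] by (auto elim: dvdE)
        define g0 where "g0 = proj n r"
        have g0p: "g0 \<in> polys n" unfolding g0_def by (rule proj_polys)
        have XiGKM: "Xi n w u \<in> GKM n w" by (rule Xi_GKM[OF uS])
        have pu: "p u = Xi n w u u * g0"
        proof -
          have "p u = proj n (p u)" using proj_id[OF GKM_polys[OF p]] by simp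
          also have "\<dots> = proj n (Xi n w u u) * g0" unfolding r g0_def by (rule proj_mult)
          also have "proj n (Xi n w u u) = Xi n w u u" by (rule proj_id[OF GKM_polys[OF XiGKM]])
          finally show ?thesis .
        qed
        define p' where "p' = p - (\<lambda>_. g0) * Xi n w u"
        have p': "p' \<in> GKM n w" unfolding p'_def
          by (rule GKM_diff[OF p GKM_cmul[OF XiGKM g0p]])
        have supp: "lexless u x" if "x \<in> Bw n w" "p' x \<noteq> 0" for x
        proof -
          have "x \<noteq> u" using that pu by (auto simp: p'_def)
          moreover have "\<not> lexless x u"
          proof
            assume l: "lexless x u"
            have xw: "bruhat_le n x w" using that by (simp add: Bw_def)
            have "p x = 0" by (rule z[OF xw l])
            moreover have "Xi n w u x = 0" by (rule Xi_lex0[OF xw uS l])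
            ultimately show False using that by (simp add: p'_def)
          qed
          ultimately show ?thesis using lex_total by blast
        qed
        let ?A = "{x\<in>Bw n w. \<exists>y\<in>Bw n w. p' y \<noteq> 0 \<and> (y = x \<or> lexless y x)}"
        let ?B = "{x\<in>Bw n w. \<exists>y\<in>Bw n w. p y \<noteq> 0 \<and> (y = x \<or> lexless y x)}"
        have pu0: "p u \<noteq> 0" using u by (simp add: S_def)
        have AB: "?A \<subseteq> ?B"
        proof
          fix x assume x: "x \<in> ?A"
          then obtain y where y: "y \<in> Bw n w" "p' y \<noteq> 0" "y = x \<or> lexless y x" by blast
          have "lexless u y" using supp y by blast
          then have "lexless u x" using y lex_trans by blast
          then show "x \<in> ?B" using x uB pu0 by blast
        qed
        moreover have "u \<in> ?B" using uB pu0 by blast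
        moreover have "u \<notin> ?A"
        proof
          assume "u \<in> ?A"
          then obtain y where y: "y \<in> Bw n w" "p' y \<noteq> 0" "y = u \<or> lexless y u" by blast
          have "lexless u y" using supp y by blast
          then show False using y lex_irrefl lex_asym by blast
        qed
        ultimately have "?A \<subset> ?B" by blast
        then have "M p' < M p" unfolding M_def
          by (rule psubset_card_mono[rotated]) (simp add: finite_Bw)
        then obtain g' where g': "\<forall>v. g' v \<in> polys n" "expands n w p' g'"
          using less.IH[of "M p'"] p' MN by blast
        define g where "g = g'(u := g' u + g0)"
        have "\<forall>v. g v \<in> polys n" using g' g0p by (simp add: g_def)
        moreover have "expands n w p g"
          unfolding expands_def
        proof
          show "\<forall>v. \<not> bruhat_le n v w \<longrightarrow> g v = 0"
            using g' uw by (auto simp: g_def expands_def)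
          have trm: "(\<lambda>_. g v) * Xi n w v = (\<lambda>_. g' v) * Xi n w v + (if v = u then (\<lambda>_. g0) * Xi n w u else 0)" for v
            by (rule ext) (simp add: g_def algebra_simps)
          have "(\<Sum>v\<in>Bw n w. (\<lambda>_. g v) * Xi n w v) =
                (\<Sum>v\<in>Bw n w. (\<lambda>_. g' v) * Xi n w v) + (\<Sum>v\<in>Bw n w. if v = u then (\<lambda>_. g0) * Xi n w u else 0)"
            unfolding trm by (rule sum.distrib)
          also have "(\<Sum>v\<in>Bw n w. if v = u then (\<lambda>_. g0) * Xi n w u else 0) = (\<lambda>_. g0) * Xi n w u"
            using uB finite_Bw by simp
          also have "(\<Sum>v\<in>Bw n w. (\<lambda>_. g' v) * Xi n w v) = p'"
            using g'(2) unfolding expands_def by blast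
          finally have e: "(\<Sum>v\<in>Bw n w. (\<lambda>_. g v) * Xi n w v) = p' + (\<lambda>_. g0) * Xi n w u" .
          have "p' + (\<lambda>_. g0) * Xi n w u = p" by (simp only: p'_def diff_add_cancel)
          then show "p = (\<Sum>v\<in>Bw n w. (\<lambda>_. g v) * Xi n w v)" using e by metis
        qed
        ultimately show ?thesis by blast
      qed
    qed
  qed
  then show ?thesis using p0 by blast
qed

definition coef :: "nat \<Rightarrow> (nat \<Rightarrow> nat) \<Rightarrow> ((nat \<Rightarrow> nat) \<Rightarrow> mpoly) \<Rightarrow> (nat \<Rightarrow> nat) \<Rightarrow> mpoly" where
  "coef n w p = (THE g. expands n w p g)"

lemma coef_eq: "expands n w p g \<Longrightarrow> coef n w p = g"
  unfolding coef_def by (rule the_equality) (auto intro: expands_unique)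

lemma coef_props:
  assumes "p \<in> GKM n w"
  shows "expands n w p (coef n w p)" "coef n w p v \<in> polys n"
proof -
  obtain g where g: "\<forall>v. g v \<in> polys n" "expands n w p g" using expand_exists[OF assms] by blast
  have "coef n w p = g" by (rule coef_eq[OF g(2)])
  then show "expands n w p (coef n w p)" "coef n w p v \<in> polys n" using g by simp_all
qed



subsection \<open>The ideal generated by the variables\<close>

definition tgood :: "nat \<Rightarrow> (nat \<Rightarrow> nat) \<Rightarrow> ((nat \<Rightarrow> nat) \<Rightarrow> mpoly) \<Rightarrow> bool" where
  "tgood n w f \<longleftrightarrow> (\<exists>y. (\<forall>i. good n w (y i)) \<and> f = (\<Sum>i=1..n. (\<lambda>_. var i) * y i))"

lemma tgood_0: "tgood n w 0"
  unfolding tgood_def by (rule exI[of _ "\<lambda>_. 0"]) (simp add: good_0)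

lemma tgood_add: "tgood n w f \<Longrightarrow> tgood n w g \<Longrightarrow> tgood n w (f + g)"
  unfolding tgood_def
proof (elim exE conjE)
  fix y z assume y: "\<forall>i. good n w (y i)" "f = (\<Sum>i=1..n. (\<lambda>_. var i) * y i)"
    and z: "\<forall>i. good n w (z i)" "g = (\<Sum>i=1..n. (\<lambda>_. var i) * z i)"
  show "\<exists>y. (\<forall>i. good n w (y i)) \<and> f + g = (\<Sum>i=1..n. (\<lambda>_. var i) * y i)"
    by (rule exI[of _ "\<lambda>i. y i + z i"]) (use y z in \<open>simp add: good_add distrib_left sum.distrib\<close>)
qed

lemma tgood_mult: "tgood n w f \<Longrightarrow> good n w G \<Longrightarrow> tgood n w (f * G)"
  unfolding tgood_def
proof (elim exE conjE)
  fix y assume y: "\<forall>i. good n w (y i)" "f = (\<Sum>i=1..n. (\<lambda>_. var i) * y i)" and G: "good n w G"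
  show "\<exists>y. (\<forall>i. good n w (y i)) \<and> f * G = (\<Sum>i=1..n. (\<lambda>_. var i) * y i)"
    by (rule exI[of _ "\<lambda>i. y i * G"]) (use y G in \<open>simp add: good_mult sum_distrib_right mult.assoc\<close>)
qed

lemma tgood_uminus: "tgood n w f \<Longrightarrow> tgood n w (- f)"
  using tgood_mult[of n w f "- 1"] good_uminus[OF good_1] by simp

lemma tgood_diff: "tgood n w f \<Longrightarrow> tgood n w g \<Longrightarrow> tgood n w (f - g)"
  using tgood_add[of n w f "- g"] tgood_uminus[of n w g] by simp

lemma tgood_sum: "(\<And>i. i \<in> I \<Longrightarrow> tgood n w (f i)) \<Longrightarrow> tgood n w (\<Sum>i\<in>I. f i)"
  by (induction I rule: infinite_finite_induct) (auto intro: tgood_add tgood_0)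

lemma tgood_cmul:
  assumes c: "c \<in> polys n" "lk c 0 = 0" and G: "good n w G"
  shows "tgood n w ((\<lambda>_. c) * G)"
proof -
  obtain h where h: "\<forall>i. h i \<in> polys n" "c = (\<Sum>i=1..n. var i * h i)"
    using zc_decomp[OF c] by blast
  have e1: "(\<lambda>_. c) * G = (\<Sum>i=1..n. (\<lambda>_. var i) * ((\<lambda>_. h i) * G))"
    by (rule ext) (simp add: h(2) fsum_apply sum_distrib_right mult.assoc)
  have e2: "\<forall>i. good n w ((\<lambda>_. h i) * G)" using h G by (auto intro: good_mult good_const)
  show ?thesis unfolding tgood_def
  proof (intro exI[of _ "\<lambda>i. (\<lambda>_. h i) * G"] conjI)
    show "\<forall>i. good n w ((\<lambda>i. (\<lambda>_. h i) * G) i)" using e2 by simp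
    show "(\<lambda>_. c) * G = (\<Sum>i=1..n. (\<lambda>_. var i) * (\<lambda>i. (\<lambda>_. h i) * G) i)" using e1 by simp
  qed
qed

lemma restr_tgood: "tgood n w f \<Longrightarrow> restr n w f \<in> tGKM n w"
  unfolding tgood_def tGKM_def mem_Collect_eq
proof (elim exE conjE)
  fix y assume y: "\<forall>i. good n w (y i)" "f = (\<Sum>i=1..n. (\<lambda>_. var i) * y i)"
  show "\<exists>z. (\<forall>i. z i \<in> GKM n w) \<and> restr n w f = (\<lambda>u. \<Sum>i = 1..n. var i * z i u)"
  proof (intro exI[of _ "\<lambda>i. restr n w (y i)"] conjI allI)
    show "restr n w (y i) \<in> GKM n w" for i using y(1) by (simp add: restr_GKM)
    show "restr n w f = (\<lambda>u. \<Sum>i = 1..n. var i * restr n w (y i) u)"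
      by (rule ext) (simp add: y(2) restr_def fsum_apply)
  qed
qed

lemma tgood_telescope:
  assumes "finite I" "\<And>i. i \<in> I \<Longrightarrow> good n w (A i)" "\<And>i. i \<in> I \<Longrightarrow> good n w (B i)"
    "\<And>i. i \<in> I \<Longrightarrow> tgood n w (A i - B i)"
  shows "tgood n w ((\<Prod>i\<in>I. A i) - (\<Prod>i\<in>I. B i))"
  using assms
proof (induction I rule: finite_induct)
  case empty
  have "tgood n w (\<lambda>_. 0)" using tgood_0 by (simp add: zero_fun_def)
  then show ?case by simp
next
  case (insert x F)
  have e: "(\<Prod>i\<in>insert x F. A i) - (\<Prod>i\<in>insert x F. B i) =
      (A x - B x) * (\<Prod>i\<in>F. A i) + ((\<Prod>i\<in>F. A i) - (\<Prod>i\<in>F. B i)) * B x"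
    using insert.hyps by (simp add: algebra_simps)
  have "good n w (\<Prod>i\<in>F. A i)" using insert.prems by (auto intro: good_prod)
  moreover have "tgood n w ((\<Prod>i\<in>F. A i) - (\<Prod>i\<in>F. B i))" using insert.prems by (intro insert.IH) auto
  moreover have "tgood n w (A x - B x)" by (rule insert.prems(3)) simp
  moreover have "good n w (B x)" by (rule insert.prems(2)) simp
  ultimately show ?case unfolding e
    by (intro tgood_add tgood_mult)
qed

definition phi :: "nat \<Rightarrow> (nat \<Rightarrow> nat) \<Rightarrow> nat \<Rightarrow> ((nat \<Rightarrow> nat) \<Rightarrow> mpoly) \<Rightarrow> (nat \<Rightarrow> nat) \<Rightarrow> complex" where
  "phi n w d p = (\<lambda>v. if bruhat_le n v w \<and> len n v = d then lk (coef n w p v) 0 else 0)"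

lemma expands_apply: assumes "expands n w p g" shows "p u = (\<Sum>v\<in>Bw n w. g v * Xi n w v u)"
proof -
  have e: "p = (\<Sum>v\<in>Bw n w. (\<lambda>_. g v) * Xi n w v)" using assms unfolding expands_def by blast
  show ?thesis by (subst e) (simp only: fsum_apply times_fun_apply)
qed

lemma expandsI:
  assumes "\<forall>v. \<not> bruhat_le n v w \<longrightarrow> g v = 0" "\<And>u. p u = (\<Sum>v\<in>Bw n w. g v * Xi n w v u)"
  shows "expands n w p g"
  unfolding expands_def using assms by (auto simp: fun_eq_iff fsum_apply)

lemma phi_linear:
  assumes x: "x \<in> GKM n w" and y: "y \<in> GKM n w"
  shows "phi n w d (\<lambda>u. sng 0 a * x u + sng 0 b * y u) = (\<lambda>v. a * phi n w d x v + b * phi n w d y v)"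
proof -
  let ?gx = "coef n w x" and ?gy = "coef n w y"
  define h where "h v = cst a * ?gx v + cst b * ?gy v" for v
  have ex: "expands n w x ?gx" and ey: "expands n w y ?gy" using coef_props x y by blast+
  have "expands n w (\<lambda>u. sng 0 a * x u + sng 0 b * y u) h"
  proof (rule expandsI)
    show "\<forall>v. \<not> bruhat_le n v w \<longrightarrow> h v = 0" using ex ey by (simp add: h_def expands_def)
    fix u
    show "sng 0 a * x u + sng 0 b * y u = (\<Sum>v\<in>Bw n w. h v * Xi n w v u)"
      unfolding expands_apply[OF ex, of u] expands_apply[OF ey, of u] sum_distrib_left
        sum.distrib[symmetric]
      by (rule sum.cong[OF refl]) (simp add: h_def cst_def distrib_right mult.assoc)
  qed
  then have "coef n w (\<lambda>u. sng 0 a * x u + sng 0 b * y u) = h" by (rule coef_eq)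
  then show ?thesis by (auto simp: phi_def h_def fun_eq_iff lookup_add lk_cst_mult)
qed

lemma lk_var_mult0: "lk (var i * q) 0 = 0"
proof (rule ccontr)
  assume "lk (var i * q) 0 \<noteq> 0"
  then have "0 \<in> ks (var i * q)" by (simp add: in_keys_iff)
  then obtain a b where ab: "0 = a + b" "a \<in> ks (var i)" "b \<in> ks q" using keys_mult by blast
  then have "a = sng i 1" by (simp add: var_def split: if_splits)
  then have "lk (a + b) i \<noteq> 0" by (simp add: lookup_add)
  then show False using ab by simp
qed

lemma phi_tGKM:
  assumes x: "x \<in> tGKM n w" shows "phi n w d x = (\<lambda>_. 0)"
proof -
  obtain y where y: "\<forall>i. y i \<in> GKM n w" "x = (\<lambda>u. \<Sum>i = 1..n. var i * y i u)"
    using x by (auto simp: tGKM_def)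
  let ?hy = "\<lambda>i. coef n w (y i)"
  have ey: "expands n w (y i) (?hy i)" for i using coef_props y(1) by blast
  define h where "h v = (\<Sum>i=1..n. var i * ?hy i v)" for v
  have "expands n w x h"
  proof (rule expandsI)
    show "\<forall>v. \<not> bruhat_le n v w \<longrightarrow> h v = 0" using ey by (simp add: h_def expands_def)
    fix u
    have "x u = (\<Sum>i=1..n. var i * (\<Sum>v\<in>Bw n w. ?hy i v * Xi n w v u))"
      using y(2) expands_apply[OF ey] by simp
    also have "\<dots> = (\<Sum>i=1..n. \<Sum>v\<in>Bw n w. var i * ?hy i v * Xi n w v u)"
      by (simp only: sum_distrib_left mult.assoc)
    also have "\<dots> = (\<Sum>v\<in>Bw n w. \<Sum>i=1..n. var i * ?hy i v * Xi n w v u)"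
      by (rule sum.swap)
    also have "\<dots> = (\<Sum>v\<in>Bw n w. h v * Xi n w v u)"
      by (simp only: h_def sum_distrib_right)
    finally show "x u = (\<Sum>v\<in>Bw n w. h v * Xi n w v u)" .
  qed
  then have "coef n w x = h" by (rule coef_eq)
  then show ?thesis by (auto simp: phi_def h_def fun_eq_iff lookup_sum lk_var_mult0)
qed

lemma hc_zero[simp]: "hc e 0 = 0" by (simp add: hc_def)

lemma phi_kernel:
  assumes x: "x \<in> GKM n w" and hx: "\<forall>u. homog d (x u)" and z: "phi n w d x = (\<lambda>_. 0)"
  shows "x \<in> tGKM n w"
proof -
  let ?g = "coef n w x"
  have ex: "expands n w x ?g" and gp: "\<And>v. ?g v \<in> polys n" using coef_props x by blast+
  define g' where "g' v = (if len n v \<le> d then hc (d - len n v) (?g v) else 0)" for v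
  have "expands n w x g'"
  proof (rule expandsI)
    show "\<forall>v. \<not> bruhat_le n v w \<longrightarrow> g' v = 0" using ex by (simp add: g'_def expands_def)
    fix u
    have "x u = hc d (x u)" using hc_homog[OF hx[rule_format, of u], of d] by simp
    also have "\<dots> = (\<Sum>v\<in>Bw n w. hc d (?g v * Xi n w v u))"
      unfolding expands_apply[OF ex, of u] by (rule hc_sum)
    also have "\<dots> = (\<Sum>v\<in>Bw n w. g' v * Xi n w v u)"
    proof (rule sum.cong[OF refl])
      fix v assume "v \<in> Bw n w"
      then have "v \<in> Sn n" by (auto simp: Bw_def dest: bruhat_le_Sn)
      then show "hc d (?g v * Xi n w v u) = g' v * Xi n w v u"
        by (simp add: hc_mult_homog[OF Xi_homog] g'_def)
    qed
    finally show "x u = (\<Sum>v\<in>Bw n w. g' v * Xi n w v u)" .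
  qed
  then have gg: "?g = g'" using coef_eq by blast
  have zc: "lk (?g v) 0 = 0" for v
  proof (cases "bruhat_le n v w \<and> len n v = d")
    case True
    then show ?thesis using fun_cong[OF z, of v] by (simp add: phi_def)
  next
    case False
    show ?thesis
    proof (cases "bruhat_le n v w")
      case True
      then have "len n v \<noteq> d" using False by simp
      then show ?thesis by (subst gg) (auto simp: g'_def lk_hc0)
    next
      case False
      then show ?thesis using ex by (simp add: expands_def)
    qed
  qed
  have "\<forall>v. \<exists>H. (\<forall>i. H i \<in> polys n) \<and> ?g v = (\<Sum>i=1..n. var i * H i)"
    using zc_decomp[OF gp zc] by blast
  then obtain H where H: "\<And>v. (\<forall>i. H v i \<in> polys n) \<and> ?g v = (\<Sum>i=1..n. var i * H v i)"
    by metis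
  define y where "y i = (\<Sum>v\<in>Bw n w. (\<lambda>_. H v i) * Xi n w v)" for i
  have "\<forall>i. y i \<in> GKM n w"
    unfolding y_def using H
    by (auto intro!: GKM_sum GKM_cmul Xi_GKM simp: Bw_def dest: bruhat_le_Sn)
  moreover have "x = (\<lambda>u. \<Sum>i = 1..n. var i * y i u)"
  proof
    fix u
    have "x u = (\<Sum>v\<in>Bw n w. (\<Sum>i=1..n. var i * H v i) * Xi n w v u)"
      using expands_apply[OF ex, of u] H by simp
    also have "\<dots> = (\<Sum>v\<in>Bw n w. \<Sum>i=1..n. var i * (H v i * Xi n w v u))"
      by (simp only: sum_distrib_right mult.assoc)
    also have "\<dots> = (\<Sum>i=1..n. \<Sum>v\<in>Bw n w. var i * (H v i * Xi n w v u))"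
      by (rule sum.swap)
    also have "\<dots> = (\<Sum>i = 1..n. var i * y i u)"
      by (simp only: y_def fsum_apply sum_distrib_left times_fun_apply)
    finally show "x u = (\<Sum>i = 1..n. var i * y i u)" .
  qed
  ultimately show ?thesis unfolding tGKM_def by blast
qed

lemma phi_image:
  assumes w: "w \<in> Sn n"
  shows "phi n w d ` GKM_deg n w d = {f. \<forall>v. \<not> (bruhat_le n v w \<and> len n v = d) \<longrightarrow> f v = 0}"
proof
  show "phi n w d ` GKM_deg n w d \<subseteq> {f. \<forall>v. \<not> (bruhat_le n v w \<and> len n v = d) \<longrightarrow> f v = 0}"
    by (auto simp: phi_def)
  show "{f. \<forall>v. \<not> (bruhat_le n v w \<and> len n v = d) \<longrightarrow> f v = 0} \<subseteq> phi n w d ` GKM_deg n w d"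
  proof
    fix f :: "(nat \<Rightarrow> nat) \<Rightarrow> complex" assume f: "f \<in> {f. \<forall>v. \<not> (bruhat_le n v w \<and> len n v = d) \<longrightarrow> f v = 0}"
    define c where "c v = cst (if len n v = d then f v else 0)" for v
    define p where "p = (\<Sum>v\<in>Bw n w. (\<lambda>_. c v) * Xi n w v)"
    have vS: "v \<in> Bw n w \<Longrightarrow> v \<in> Sn n" for v by (auto simp: Bw_def dest: bruhat_le_Sn)
    have pG: "p \<in> GKM n w" unfolding p_def
      by (auto intro!: GKM_sum GKM_cmul Xi_GKM vS simp: c_def)
    have ph: "homog d (p u)" for u
      unfolding p_def fsum_apply times_fun_apply
    proof (rule homog_sum)
      fix v assume "v \<in> Bw n w"
      then show "homog d (c v * Xi n w v u)"
        using Xi_homog[OF vS] by (auto simp: c_def intro: homog_cst_mult)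
    qed
    define g where "g v = (if bruhat_le n v w then c v else 0)" for v
    have "expands n w p g"
      unfolding expands_def p_def g_def by (auto simp: Bw_def intro!: sum.cong)
    then have "coef n w p = g" by (rule coef_eq)
    then have "phi n w d p = f" using f by (auto simp: phi_def g_def c_def cst_def fun_eq_iff)
    moreover have "p \<in> GKM_deg n w d" using pG ph by (simp add: GKM_deg_def)
    ultimately show "f \<in> phi n w d ` GKM_deg n w d" by blast
  qed
qed


subsection \<open>The action of S_n\<close>

lemma good_mono: "good n w' p \<Longrightarrow> (\<And>u. bruhat_le n u w \<Longrightarrow> bruhat_le n u w') \<Longrightarrow> good n w p"
  unfolding good_def by blast

lemma le_w0: "bruhat_le n u w \<Longrightarrow> bruhat_le n u (longest n)"
  by (rule Sn_le_longest[OF bruhat_le_Sn(1)])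

lemma pa_one: "bij s \<Longrightarrow> poly_act s 1 = 1"
  using pa_cst[of s 1] by simp

lemma pa_prod: "bij s \<Longrightarrow> poly_act s (prod f I) = (\<Prod>i\<in>I. poly_act s (f i))"
  by (induction I rule: infinite_finite_induct) (auto simp: pa_one pa_mult)

lemma inv_tr_conj:
  assumes s: "s \<in> Sn n" shows "inv s \<circ> tr j k = tr (inv s j) (inv s k) \<circ> inv s"
proof -
  have b: "bij (inv s)" using Sn_bij[OF Sn_inv[OF s]] .
  have "tr (inv s j) (inv s k) \<circ> inv s = inv s \<circ> tr (inv (inv s) (inv s j)) (inv (inv s) (inv s k))"
    by (rule transpose_comp_eq[OF b])
  also have "inv (inv s) = s" using Sn_bij[OF s] by (simp add: inv_inv_eq)
  finally have "tr (inv s j) (inv s k) \<circ> inv s = inv s \<circ> tr j k" by (simp only: Sn_app_inv[OF s])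
  then show ?thesis by (rule sym)
qed

lemma lk_var0: "lk (var i) 0 = 0"
proof -
  have "sng i (1::nat) \<noteq> 0" by (metis lookup_single_eq lookup_zero one_neq_zero)
  then show ?thesis by (simp add: var_def lookup_single when_def)
qed

lemma flag_GKM:
  assumes s: "s \<in> Sn n" and p: "p \<in> GKM_flag n"
  shows "flag_act n s p \<in> GKM_flag n"
proof -
  let ?w0 = "longest n"
  let ?F = "flag_act n s p"
  have pG: "p \<in> GKM n ?w0" using p by (simp add: GKM_flag_def)
  have sb: "bij s" using Sn_bij[OF s] .
  have sp: "s permutes {1..n}" using s by (simp add: Sn_def)
  have Fu: "?F u = poly_act s (p (inv s \<circ> u))" if "u \<in> Sn n" for u
    using that by (simp add: flag_act_def)
  have "good n ?w0 ?F"
  proof (rule goodI)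
    fix u assume "bruhat_le n u ?w0"
    then have "u \<in> Sn n" by (rule bruhat_le_Sn)
    then show "?F u \<in> polys n" by (simp add: Fu pa_polys[OF sp] GKM_polys[OF pG])
  next
    fix j k u assume jk: "1 \<le> j" "j < k" "k \<le> n" and u: "bruhat_le n u ?w0" and tu: "bruhat_le n (tr j k \<circ> u) ?w0"
    have uS: "u \<in> Sn n" and tuS: "tr j k \<circ> u \<in> Sn n" using bruhat_le_Sn(1) u tu by blast+
    define x where "x = inv s \<circ> u"
    define j' where "j' = inv s j"
    define k' where "k' = inv s k"
    have xS: "x \<in> Sn n" unfolding x_def by (rule Sn_comp[OF Sn_inv[OF s] uS])
    have y: "inv s \<circ> (tr j k \<circ> u) = tr j' k' \<circ> x"
      by (simp add: x_def j'_def k'_def comp_assoc[symmetric] inv_tr_conj[OF s])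
    have jn: "j' \<in> {1..n}" "k' \<in> {1..n}" unfolding j'_def k'_def
      using Sn_in[OF Sn_inv[OF s], of j] Sn_in[OF Sn_inv[OF s], of k] jk by auto
    have jk': "j' \<noteq> k'" unfolding j'_def k'_def using jk Sn_inj[OF Sn_inv[OF s]] by fastforce
    have sj: "s j' = j" "s k' = k" by (simp_all add: j'_def k'_def Sn_app_inv[OF s])
    have x0: "bruhat_le n x ?w0" using Sn_le_longest[OF xS] .
    have y0: "bruhat_le n (tr j' k' \<circ> x) ?w0"
      using Sn_le_longest[OF Sn_comp[OF Sn_tr[OF jn] xS]] .
    have diff: "?F u - ?F (tr j k \<circ> u) = poly_act s (p x - p (tr j' k' \<circ> x))"
      using Fu[OF uS] Fu[OF tuS] y by (simp add: pa_diff[OF sb] x_def)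
    show "cong n j k (?F u) (?F (tr j k \<circ> u))"
    proof (cases "j' < k'")
      case True
      have "cong n j' k' (p x) (p (tr j' k' \<circ> x))"
        by (rule goodD2[OF GKM_good[OF pG]]) (use True jn x0 y0 in auto)
      then obtain q where q: "q \<in> polys n" "p x - p (tr j' k' \<circ> x) = (var j' - var k') * q"
        by (auto simp: cong_def)
      have "?F u - ?F (tr j k \<circ> u) = (var j - var k) * poly_act s q"
        unfolding diff q(2) by (simp add: pa_mult[OF sb] pa_diff[OF sb] pa_var[OF sb] sj)
      then show ?thesis unfolding cong_def using pa_polys[OF sp q(1)] by blast
    next
      case False
      then have kj: "k' < j'" using jk' by simp
      have "cong n k' j' (p x) (p (tr k' j' \<circ> x))"
        by (rule goodD2[OF GKM_good[OF pG]])
           (use kj jn x0 y0 in \<open>auto simp: transpose_commute\<close>)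
      then obtain q where q: "q \<in> polys n" "p x - p (tr k' j' \<circ> x) = (var k' - var j') * q"
        by (auto simp: cong_def)
      have e: "p x - p (tr j' k' \<circ> x) = (var k' - var j') * q"
        using q(2) transpose_commute[of k' j'] by simp
      have "?F u - ?F (tr j k \<circ> u) = (var k - var j) * poly_act s q"
        unfolding diff e by (simp add: pa_mult[OF sb] pa_diff[OF sb] pa_var[OF sb] sj)
      then have "?F u - ?F (tr j k \<circ> u) = (var j - var k) * (- poly_act s q)"
        by (simp add: algebra_simps)
      then show ?thesis unfolding cong_def using pa_polys[OF sp q(1)]
        by (intro bexI[of _ "- poly_act s q"]) simp_all
    qed
  qed
  moreover have "\<forall>u. \<not> bruhat_le n u ?w0 \<longrightarrow> ?F u = 0"
    using Sn_le_longest by (auto simp: flag_act_def)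
  ultimately show ?thesis by (simp add: GKM_flag_def GKM_iff)
qed

definition Es :: "nat \<Rightarrow> (nat \<Rightarrow> nat) \<Rightarrow> (nat \<Rightarrow> nat) \<Rightarrow> (nat \<Rightarrow> nat) \<Rightarrow> mpoly" where
  "Es n s v = (\<Prod>(a, b)\<in>PInv n v. (\<lambda>u. var (u a)) - (\<lambda>u. var (s (v b))))"

lemma Es_apply: "Es n s v u = (\<Prod>(a, b)\<in>PInv n v. var (u a) - var (s (v b)))"
  unfolding Es_def fprod_apply by (simp add: split_beta)

lemma good_Es: assumes s: "s \<in> Sn n" and v: "v \<in> Sn n" shows "good n w (Es n s v)"
  unfolding Es_def
proof (rule good_prod)
  fix p assume p: "p \<in> PInv n v"
  obtain a b where ab: "p = (a, b)" by (cases p)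
  have a: "a \<in> {1..n}" "b \<in> {1..n}" using p ab by (auto simp: PInv_def)
  then have "v b \<in> {1..n}" using Sn_in[OF v, of b] by simp
  then have "s (v b) \<in> {1..n}" using Sn_in[OF s, of "v b"] by simp
  then show "good n w ((\<lambda>(a, b). (\<lambda>u. var (u a)) - (\<lambda>u. var (s (v b)))) p)"
    unfolding ab using a by (auto intro!: good_diff good_X good_const polys_var)
qed

lemma tgood_Es_E: assumes s: "s \<in> Sn n" and v: "v \<in> Sn n" shows "tgood n w (Es n s v - E n v)"
  unfolding Es_def E_def
proof (rule tgood_telescope[OF finite_PInv])
  fix p assume p: "p \<in> PInv n v"
  obtain a b where ab: "p = (a, b)" by (cases p)
  have a: "a \<in> {1..n}" "b \<in> {1..n}" using p ab by (auto simp: PInv_def)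
  then have vb: "v b \<in> {1..n}" using Sn_in[OF v, of b] by simp
  then have svb: "s (v b) \<in> {1..n}" using Sn_in[OF s, of "v b"] by simp
  show "good n w ((\<lambda>(a, b). (\<lambda>u. var (u a)) - (\<lambda>u. var (s (v b)))) p)"
    unfolding ab using a svb by (auto intro!: good_diff good_X good_const polys_var)
  show "good n w ((\<lambda>(a, b). (\<lambda>u. var (u a)) - (\<lambda>u. var (v b))) p)"
    unfolding ab using a vb by (auto intro!: good_diff good_X good_const polys_var)
  have "(\<lambda>(a, b). (\<lambda>u. var (u a)) - (\<lambda>u. var (s (v b)))) p - (\<lambda>(a, b). (\<lambda>u. var (u a)) - (\<lambda>u. var (v b))) p
      = (\<lambda>_. var (v b) - var (s (v b))) * 1"
    by (rule ext) (simp add: ab)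
  moreover have "tgood n w ((\<lambda>_. var (v b) - var (s (v b))) * 1)"
  proof (rule tgood_cmul)
    show "var (v b) - var (s (v b)) \<in> polys n" using vb svb by (simp add: polys_var)
    show "lk (var (v b) - var (s (v b))) 0 = 0" by (simp add: lookup_minus lk_var0)
  qed (rule good_1)
  ultimately show "tgood n w ((\<lambda>(a, b). (\<lambda>u. var (u a)) - (\<lambda>u. var (s (v b)))) p - (\<lambda>(a, b). (\<lambda>u. var (u a)) - (\<lambda>u. var (v b))) p)"
    by simp
qed

lemma restr_diff_tGKM:
  assumes w: "w \<in> Sn n" and s: "s \<in> Sn n" and p: "p \<in> GKM_flag n"
  shows "restr n w (flag_act n s p) - restr n w p \<in> tGKM n w"
proof -
  let ?w0 = "longest n"
  have pG: "p \<in> GKM n ?w0" using p by (simp add: GKM_flag_def)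
  have sb: "bij s" using Sn_bij[OF s] .
  have sp: "s permutes {1..n}" using s by (simp add: Sn_def)
  let ?g = "coef n ?w0 p"
  have ep: "expands n ?w0 p ?g" and gp: "\<And>v. ?g v \<in> polys n" using coef_props[OF pG] by blast+
  have BS: "v \<in> Bw n ?w0 \<Longrightarrow> v \<in> Sn n" for v by (auto simp: Bw_def dest: bruhat_le_Sn)
  define K where "K = (\<Sum>v\<in>Bw n ?w0. (\<lambda>_. poly_act s (?g v)) * Es n s v - (\<lambda>_. ?g v) * E n v)"
  have pu: "p u = (\<Sum>v\<in>Bw n ?w0. ?g v * E n v u)" if "u \<in> Sn n" for u
    unfolding expands_apply[OF ep, of u] using Sn_le_longest[OF that]
    by (simp add: Xi_def restr_def)
  have Fu: "flag_act n s p u = (\<Sum>v\<in>Bw n ?w0. poly_act s (?g v) * Es n s v u)" if u: "u \<in> Sn n" for u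
  proof -
    have xS: "inv s \<circ> u \<in> Sn n" by (rule Sn_comp[OF Sn_inv[OF s] u])
    have "flag_act n s p u = poly_act s (p (inv s \<circ> u))" using u by (simp add: flag_act_def)
    also have "\<dots> = (\<Sum>v\<in>Bw n ?w0. poly_act s (?g v) * poly_act s (E n v (inv s \<circ> u)))"
      by (simp add: pu[OF xS] pa_sum[OF sb] pa_mult[OF sb])
    also have "\<dots> = (\<Sum>v\<in>Bw n ?w0. poly_act s (?g v) * Es n s v u)"
    proof (rule sum.cong[OF refl])
      fix v
      have "poly_act s (E n v (inv s \<circ> u)) = Es n s v u"
        unfolding E_apply Es_apply pa_prod[OF sb]
        by (rule prod.cong[OF refl]) (auto simp: pa_diff[OF sb] pa_var[OF sb] Sn_app_inv[OF s])
      then show "poly_act s (?g v) * poly_act s (E n v (inv s \<circ> u)) = poly_act s (?g v) * Es n s v u"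
        by simp
    qed
    finally show ?thesis .
  qed
  have eq: "restr n w (flag_act n s p) - restr n w p = restr n w K"
  proof
    fix u
    show "(restr n w (flag_act n s p) - restr n w p) u = restr n w K u"
    proof (cases "bruhat_le n u w")
      case True
      then have uS: "u \<in> Sn n" by (rule bruhat_le_Sn)
      have "K u = (\<Sum>v\<in>Bw n ?w0. poly_act s (?g v) * Es n s v u - ?g v * E n v u)"
        unfolding K_def fsum_apply by simp
      also have "\<dots> = flag_act n s p u - p u"
        by (simp add: Fu[OF uS] pu[OF uS] sum_subtractf)
      finally show ?thesis using True by (simp add: restr_def)
    next
      case False then show ?thesis by (simp add: restr_def)
    qed
  qed
  have "tgood n w K"
    unfolding K_def
  proof (rule tgood_sum)
    fix v assume vB: "v \<in> Bw n ?w0"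
    have vS: "v \<in> Sn n" using BS[OF vB] .
    have split: "(\<lambda>_. poly_act s (?g v)) * Es n s v - (\<lambda>_. ?g v) * E n v =
        (\<lambda>_. poly_act s (?g v) - ?g v) * Es n s v + (Es n s v - E n v) * (\<lambda>_. ?g v)"
      by (rule ext) (simp add: algebra_simps)
    have t1: "tgood n w ((\<lambda>_. poly_act s (?g v) - ?g v) * Es n s v)"
      by (rule tgood_cmul) (auto simp: lookup_minus pa_lk0[OF sb] pa_polys[OF sp gp] gp good_Es[OF s vS])
    have t2: "tgood n w ((Es n s v - E n v) * (\<lambda>_. ?g v))"
      by (rule tgood_mult[OF tgood_Es_E[OF s vS] good_const[OF gp]])
    show "tgood n w ((\<lambda>_. poly_act s (?g v)) * Es n s v - (\<lambda>_. ?g v) * E n v)"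
      unfolding split by (rule tgood_add[OF t1 t2])
  qed
  then show ?thesis unfolding eq by (rule restr_tgood)
qed

lemma restr_flag_GKM: "q \<in> GKM_flag n \<Longrightarrow> restr n w q \<in> GKM n w"
  unfolding GKM_flag_def
  by (rule restr_GKM[OF good_mono[OF GKM_good le_w0]])

theorem mainTheorem10:
  fixes n :: nat and w :: "nat \<Rightarrow> nat"
  assumes "w \<in> Sn n"
  shows "\<forall>d::nat. \<exists>\<phi> :: ((nat \<Rightarrow> nat) \<Rightarrow> mpoly) \<Rightarrow> ((nat \<Rightarrow> nat) \<Rightarrow> complex).
     (\<forall>x \<in> GKM_deg n w d. \<forall>y \<in> GKM_deg n w d. \<forall>a b :: complex.
         \<phi> (\<lambda>u. Poly_Mapping.single 0 a * x u + Poly_Mapping.single 0 b * y u)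
           = (\<lambda>v. a * \<phi> x v + b * \<phi> y v)) \<and>
     \<phi> ` GKM_deg n w d =
        {f. \<forall>v. \<not> (bruhat_le n v w \<and> len n v = d) \<longrightarrow> f v = 0} \<and>
     (\<forall>x \<in> GKM_deg n w d. \<phi> x = (\<lambda>_. 0) \<longleftrightarrow> x \<in> tGKM n w) \<and>
     (\<forall>s \<in> Sn n. \<forall>p \<in> GKM_flag n. (\<forall>u. homog d (p u)) \<longrightarrow>
         \<phi> (restr n w (flag_act n s p)) = \<phi> (restr n w p))"
proof
  fix d
  let ?phi = "phi n w d"
  have degG: "x \<in> GKM_deg n w d \<Longrightarrow> x \<in> GKM n w" for x by (simp add: GKM_deg_def)
  have A: "\<forall>x \<in> GKM_deg n w d. \<forall>y \<in> GKM_deg n w d. \<forall>a b :: complex.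
         ?phi (\<lambda>u. Poly_Mapping.single 0 a * x u + Poly_Mapping.single 0 b * y u)
           = (\<lambda>v. a * ?phi x v + b * ?phi y v)"
    using phi_linear degG by blast
  have B: "?phi ` GKM_deg n w d = {f. \<forall>v. \<not> (bruhat_le n v w \<and> len n v = d) \<longrightarrow> f v = 0}"
    by (rule phi_image[OF assms])
  have C: "\<forall>x \<in> GKM_deg n w d. ?phi x = (\<lambda>_. 0) \<longleftrightarrow> x \<in> tGKM n w"
  proof
    fix x assume x: "x \<in> GKM_deg n w d"
    show "?phi x = (\<lambda>_. 0) \<longleftrightarrow> x \<in> tGKM n w"
    proof
      assume "?phi x = (\<lambda>_. 0)"
      then show "x \<in> tGKM n w" using phi_kernel[of x n w d] x by (simp add: GKM_deg_def)
    next
      assume "x \<in> tGKM n w"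
      then show "?phi x = (\<lambda>_. 0)" by (rule phi_tGKM)
    qed
  qed
  have D: "\<forall>s \<in> Sn n. \<forall>p \<in> GKM_flag n. (\<forall>u. homog d (p u)) \<longrightarrow>
         ?phi (restr n w (flag_act n s p)) = ?phi (restr n w p)"
  proof (intro ballI impI)
    fix s p assume s: "s \<in> Sn n" and p: "p \<in> GKM_flag n" and h: "\<forall>u. homog d (p u)"
    let ?P = "restr n w (flag_act n s p)"
    let ?Q = "restr n w p"
    have PG: "?P \<in> GKM n w" by (rule restr_flag_GKM[OF flag_GKM[OF s p]])
    have QG: "?Q \<in> GKM n w" by (rule restr_flag_GKM[OF p])
    have "?phi (\<lambda>u. Poly_Mapping.single 0 1 * ?P u + Poly_Mapping.single 0 (-1) * ?Q u) =
          (\<lambda>v. 1 * ?phi ?P v + (-1) * ?phi ?Q v)"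
      by (rule phi_linear[OF PG QG])
    moreover have "(\<lambda>u. Poly_Mapping.single 0 1 * ?P u + Poly_Mapping.single 0 (-1) * ?Q u) = ?P - ?Q"
      by (rule ext) (simp add: single_uminus)
    moreover have "?phi (?P - ?Q) = (\<lambda>_. 0)"
      by (rule phi_tGKM[OF restr_diff_tGKM[OF assms s p]])
    ultimately have "(\<lambda>v. ?phi ?P v - ?phi ?Q v) = (\<lambda>_. 0)" by simp
    then show "?phi ?P = ?phi ?Q" by (auto simp: fun_eq_iff dest: fun_cong)
  qed
  show "\<exists>\<phi> :: ((nat \<Rightarrow> nat) \<Rightarrow> mpoly) \<Rightarrow> ((nat \<Rightarrow> nat) \<Rightarrow> complex).
     (\<forall>x \<in> GKM_deg n w d. \<forall>y \<in> GKM_deg n w d. \<forall>a b :: complex.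
         \<phi> (\<lambda>u. Poly_Mapping.single 0 a * x u + Poly_Mapping.single 0 b * y u)
           = (\<lambda>v. a * \<phi> x v + b * \<phi> y v)) \<and>
     \<phi> ` GKM_deg n w d =
        {f. \<forall>v. \<not> (bruhat_le n v w \<and> len n v = d) \<longrightarrow> f v = 0} \<and>
     (\<forall>x \<in> GKM_deg n w d. \<phi> x = (\<lambda>_. 0) \<longleftrightarrow> x \<in> tGKM n w) \<and>
     (\<forall>s \<in> Sn n. \<forall>p \<in> GKM_flag n. (\<forall>u. homog d (p u)) \<longrightarrow>
         \<phi> (restr n w (flag_act n s p)) = \<phi> (restr n w p))"
    using A B C D by blast
qed


end
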